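(* Let $H$ be a digraph with maximum degree $\Delta$, let $\delta>0$, and let $p=p(n)\in(0,1)$. (a) If $n^{-1/\Delta}\ll p\ll 1$, then as $n\to\infty$, \[ \frac{\Phi_{n,p}(H,\delta)}{n^2p^\Delta\log(1/p)}\le F(H,\delta)+o(1). \] Further, the infimum $F(H,\delta)$ is obtained when $y_1\vee y_2=1$, i.e. restricting the infimum defining $F(H,\delta)$ to points with $\max(y_1,y_2)=1$ does not change its value. (b) Suppose in addition that $H$ is connected and $\Delta$-regular. If $n^{-2/\Delta}\ll p\ll 1$, then \[ \frac{\Phi_{n,p}(H,\delta)}{n^2p^\Delta\log(1/p)}\le \delta^{2/\mathsf{v}(H)}+o(1). \] Combined with part (a), when $n^{-1/\Delta}\ll p\ll 1$ this gives \[ \frac{\Phi_{n,p}(H,\delta)}{n^2p^\Delta\log(1/p)}\le \min\big(F(H,\delta),\delta^{2/\mathsf{v}(H)}\big)+o(1). \]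
   Context: A digraph $H=(\mathsf V,\mathsf E)$ has no self-loops and at most one directed edge $(u,v)$ for each ordered pair $(u,v)$; $\mathsf v(H)=|\mathsf V(H)|$, $\mathsf e(H)=|\mathsf E(H)|$. The degree of a vertex is the sum of its in-degree and out-degree; $\Delta$ is the maximum degree, and $H$ is $\Delta$-regular if every vertex has degree $\Delta$. $\mathcal Q_n$ is the set of $n\times n$ real matrices with zero diagonal and all entries in $[0,1]$. For $Q\in\mathcal Q_n$, $t(H,Q)=n^{-\mathsf v(H)}\sum_{\phi:\mathsf V(H)\to[n]}\prod_{(i,j)\in\mathsf E(H)}Q(\phi(i),\phi(j))$. For $x\in[0,1]$, $I_p(x)=x\log\frac xp+(1-x)\log\frac{1-x}{1-p}$ (with $0\log 0=0$), and $I_p(Q)=\sum_{i\ne j}I_p(Q(i,j))$. Define \[ \Phi_{n,p}(H,\delta)=\inf_{Q\in\mathcal Q_n}\{I_p(Q): t(H,Q)\ge(1+\delta)p^{\mathsf e(H)}\}. \] $H^*$ is the induced subgraph of $H$ on the vertices of degree $\Delta$, and $\mathcal S_H$ is the collection of all independent sets of $H^*$ (including the empty set). For $S\subseteq\mathsf V(H)$: $\mathsf N^+(S)$ is the set of $v\notin S$ with $(u,v)\in\mathsf E(H)$ for some $u\in S$; $\mathsf N^-(S)$ is the set of $v\notin S$ with $(v,u)\in\mathsf E(H)$ for some $u\in S$; $A_S=|\mathsf N^+(S)|$, $B_S=|\mathsf N^-(S)|$. Let $\mathsf v^+(S)$ be the number of vertices of $S$ having no in-neighbours in $H$, $\mathsf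 v^-(S)$ the number of vertices of $S$ having no out-neighbours in $H$, and $\mathsf v^{\pm}(S)$ the number of vertices of $S$ having both an in-neighbour and an out-neighbour. Set \[ f_H(x_1,x_2,y_1,y_2)=\sum_{S\in\mathcal S_H}x_1^{\mathsf v^+(S)}x_2^{\mathsf v^-(S)}(x_1\wedge x_2)^{\mathsf v^{\pm}(S)}y_1^{A_S}y_2^{B_S}, \] \[ F(H,\delta)=\inf_{x_1,x_2\ge0,\ 0\le y_1,y_2\le1}\{x_1y_1+x_2y_2: f_H(x_1,x_2,y_1,y_2)=1+\delta\}. \] Here $a\wedge b=\min(a,b)$, $a\vee b=\max(a,b)$, and $f\ll g$ means $f/g\to0$ as $n\to\infty$. *)

theory Defs
  imports "HOL-Analysis.Analysis" "HOL-Library.FuncSet"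
begin

definition digraph :: "'v set \<Rightarrow> ('v \<times> 'v) set \<Rightarrow> bool" where
  "digraph V E \<longleftrightarrow> finite V \<and> E \<subseteq> V \<times> V \<and> (\<forall>v. (v, v) \<notin> E)"

definition indeg :: "('v \<times> 'v) set \<Rightarrow> 'v \<Rightarrow> nat" where
  "indeg E v = card {u. (u, v) \<in> E}"

definition outdeg :: "('v \<times> 'v) set \<Rightarrow> 'v \<Rightarrow> nat" where
  "outdeg E v = card {u. (v, u) \<in> E}"

definition deg :: "('v \<times> 'v) set \<Rightarrow> 'v \<Rightarrow> nat" where
  "deg E v = indeg E v + outdeg E v"

definition maxdeg :: "'v set \<Rightarrow> ('v \<times> 'v) set \<Rightarrow> nat" where
  "maxdeg V E = Max (deg E ` V)"

definition regular :: "'v set \<Rightarrow> ('v \<times> 'v) set \<Rightarrow> nat \<Rightarrow> bool" where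
  "regular V E d \<longleftrightarrow> (\<forall>v\<in>V. deg E v = d)"

definition connected_digraph :: "'v set \<Rightarrow> ('v \<times> 'v) set \<Rightarrow> bool" where
  "connected_digraph V E \<longleftrightarrow> (\<forall>u\<in>V. \<forall>v\<in>V. (u, v) \<in> (E \<union> E\<inverse>)\<^sup>*)"

text \<open>Matrices Q in \<open>\<Q>_n\<close>, indexed by {0..<n}.\<close>
definition Qmats :: "nat \<Rightarrow> (nat \<Rightarrow> nat \<Rightarrow> real) set" where
  "Qmats n = {Q. (\<forall>i<n. Q i i = 0) \<and> (\<forall>i<n. \<forall>j<n. 0 \<le> Q i j \<and> Q i j \<le> 1)}"

definition hom_density :: "'v set \<Rightarrow> ('v \<times> 'v) set \<Rightarrow> nat \<Rightarrow> (nat \<Rightarrow> nat \<Rightarrow> real) \<Rightarrow> real" where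
  "hom_density V E n Q = (1 / real n ^ card V) *
     (\<Sum>\<phi> \<in> PiE V (\<lambda>_. {..<n}). \<Prod>e\<in>E. Q (\<phi> (fst e)) (\<phi> (snd e)))"

definition xlog :: "real \<Rightarrow> real \<Rightarrow> real" where
  "xlog x a = (if x = 0 then 0 else x * ln (x / a))"

definition Ip :: "real \<Rightarrow> real \<Rightarrow> real" where
  "Ip p x = xlog x p + xlog (1 - x) (1 - p)"

definition Ip_mat :: "nat \<Rightarrow> real \<Rightarrow> (nat \<Rightarrow> nat \<Rightarrow> real) \<Rightarrow> real" where
  "Ip_mat n p Q = (\<Sum>i<n. \<Sum>j\<in>{..<n} - {i}. Ip p (Q i j))"

definition Phi :: "'v set \<Rightarrow> ('v \<times> 'v) set \<Rightarrow> nat \<Rightarrow> real \<Rightarrow> real \<Rightarrow> real" where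
  "Phi V E n p \<delta> = Inf {Ip_mat n p Q | Q. Q \<in> Qmats n \<and>
       hom_density V E n Q \<ge> (1 + \<delta>) * p ^ card E}"

definition Vstar :: "'v set \<Rightarrow> ('v \<times> 'v) set \<Rightarrow> 'v set" where
  "Vstar V E = {v\<in>V. deg E v = maxdeg V E}"

definition indep_sets :: "'v set \<Rightarrow> ('v \<times> 'v) set \<Rightarrow> 'v set set" where
  "indep_sets V E = {S. S \<subseteq> Vstar V E \<and> (\<forall>u\<in>S. \<forall>v\<in>S. (u, v) \<notin> E)}"

definition Nout :: "'v set \<Rightarrow> ('v \<times> 'v) set \<Rightarrow> 'v set \<Rightarrow> 'v set" where
  "Nout V E S = {v\<in>V. v \<notin> S \<and> (\<exists>u\<in>S. (u, v) \<in> E)}"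

definition Nin :: "'v set \<Rightarrow> ('v \<times> 'v) set \<Rightarrow> 'v set \<Rightarrow> 'v set" where
  "Nin V E S = {v\<in>V. v \<notin> S \<and> (\<exists>u\<in>S. (v, u) \<in> E)}"

definition vplus :: "('v \<times> 'v) set \<Rightarrow> 'v set \<Rightarrow> nat" where
  "vplus E S = card {v\<in>S. \<not> (\<exists>u. (u, v) \<in> E)}"

definition vminus :: "('v \<times> 'v) set \<Rightarrow> 'v set \<Rightarrow> nat" where
  "vminus E S = card {v\<in>S. \<not> (\<exists>u. (v, u) \<in> E)}"

definition vpm :: "('v \<times> 'v) set \<Rightarrow> 'v set \<Rightarrow> nat" where
  "vpm E S = card {v\<in>S. (\<exists>u. (u, v) \<in> E) \<and> (\<exists>u. (v, u) \<in> E)}"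

definition fH :: "'v set \<Rightarrow> ('v \<times> 'v) set \<Rightarrow> real \<Rightarrow> real \<Rightarrow> real \<Rightarrow> real \<Rightarrow> real" where
  "fH V E x1 x2 y1 y2 = (\<Sum>S\<in>indep_sets V E.
      x1 ^ vplus E S * x2 ^ vminus E S * (min x1 x2) ^ vpm E S *
      y1 ^ card (Nout V E S) * y2 ^ card (Nin V E S))"

definition FH :: "'v set \<Rightarrow> ('v \<times> 'v) set \<Rightarrow> real \<Rightarrow> real" where
  "FH V E \<delta> = Inf {x1 * y1 + x2 * y2 | x1 x2 y1 y2.
      x1 \<ge> 0 \<and> x2 \<ge> 0 \<and> 0 \<le> y1 \<and> y1 \<le> 1 \<and> 0 \<le> y2 \<and> y2 \<le> 1 \<and>
      fH V E x1 x2 y1 y2 = 1 + \<delta>}"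

definition FH_edge :: "'v set \<Rightarrow> ('v \<times> 'v) set \<Rightarrow> real \<Rightarrow> real" where
  "FH_edge V E \<delta> = Inf {x1 * y1 + x2 * y2 | x1 x2 y1 y2.
      x1 \<ge> 0 \<and> x2 \<ge> 0 \<and> 0 \<le> y1 \<and> y1 \<le> 1 \<and> 0 \<le> y2 \<and> y2 \<le> 1 \<and>
      max y1 y2 = 1 \<and> fH V E x1 x2 y1 y2 = 1 + \<delta>}"

definition rate :: "'v set \<Rightarrow> ('v \<times> 'v) set \<Rightarrow> real \<Rightarrow> nat \<Rightarrow> real \<Rightarrow> real" where
  "rate V E \<delta> n p = Phi V E n p \<delta> / (real n ^ 2 * p ^ maxdeg V E * ln (1 / p))"

end

theory Submission
  imports Defs
begin

lemma xlog_ge: assumes "0 \<le> x" "0 < a" shows "x - a \<le> xlog x a"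
proof (cases "x = 0")
  case True then show ?thesis using assms by (simp add: xlog_def)
next
  case False
  then have xp: "x > 0" using assms by simp
  have "ln (a / x) \<le> a / x - 1" using ln_le_minus_one[of "a/x"] xp assms by simp
  moreover have "ln (x / a) = - ln (a / x)" using xp assms by (simp add: ln_div)
  ultimately have "ln (x/a) \<ge> 1 - a / x" by simp
  then have "x * ln (x/a) \<ge> x * (1 - a/x)" using xp by (simp add: mult_left_mono)
  then show ?thesis using False xp by (simp add: xlog_def algebra_simps)
qed

lemma Ip_nonneg: assumes "0 < p" "p < 1" "0 \<le> x" "x \<le> 1" shows "0 \<le> Ip p x"
  using xlog_ge[of x p] xlog_ge[of "1-x" "1-p"] assms unfolding Ip_def by linarith

lemma Ip_one: "Ip p 1 = ln (1/p)"
  by (simp add: Ip_def xlog_def)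

lemma Ip_self: assumes "0 < p" "p < 1" shows "Ip p p = 0"
  using assms by (simp add: Ip_def xlog_def)

lemma Phi_le:
  assumes "0 < p" "p < 1" "Q \<in> Qmats n" "hom_density V E n Q \<ge> (1 + \<delta>) * p ^ card E"
  shows "Phi V E n p \<delta> \<le> Ip_mat n p Q"
  unfolding Phi_def
proof (rule cInf_lower)
  show "Ip_mat n p Q \<in> {Ip_mat n p Q |Q. Q \<in> Qmats n \<and> (1 + \<delta>) * p ^ card E \<le> hom_density V E n Q}"
    using assms by blast
  show "bdd_below {Ip_mat n p Q |Q. Q \<in> Qmats n \<and> (1 + \<delta>) * p ^ card E \<le> hom_density V E n Q}"
  proof (rule bdd_belowI[of _ 0], clarify)
    fix Q' assume "Q' \<in> Qmats n"
    then show "0 \<le> Ip_mat n p Q'" unfolding Ip_mat_def Qmats_def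
      by (auto intro!: sum_nonneg Ip_nonneg assms)
  qed
qed

definition Eout :: "('v \<times> 'v) set \<Rightarrow> 'v set \<Rightarrow> ('v \<times> 'v) set" where
  "Eout E S = {e\<in>E. fst e \<in> S}"
definition Ein :: "('v \<times> 'v) set \<Rightarrow> 'v set \<Rightarrow> ('v \<times> 'v) set" where
  "Ein E S = {e\<in>E. snd e \<in> S}"

lemma digraph_finE: "digraph V E \<Longrightarrow> finite E"
  unfolding digraph_def using finite_subset finite_cartesian_product by blast

lemma outset_fin: "digraph V E \<Longrightarrow> finite {u. (v, u) \<in> E}"
  unfolding digraph_def by (rule finite_subset[of _ V]) auto
lemma inset_fin: "digraph V E \<Longrightarrow> finite {u. (u, v) \<in> E}"
  unfolding digraph_def by (rule finite_subset[of _ V]) auto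

lemma card_Eout: assumes "digraph V E" "finite S" shows "card (Eout E S) = (\<Sum>s\<in>S. outdeg E s)"
proof -
  have "Eout E S = Sigma S (\<lambda>s. {u. (s, u) \<in> E})" unfolding Eout_def by auto
  then show ?thesis using card_SigmaI[of S "\<lambda>s. {u. (s, u) \<in> E}"] assms outset_fin[OF assms(1)]
    by (simp add: outdeg_def)
qed

lemma card_Ein: assumes "digraph V E" "finite S" shows "card (Ein E S) = (\<Sum>s\<in>S. indeg E s)"
proof -
  have "Ein E S = (\<lambda>(a,b). (b,a)) ` Sigma S (\<lambda>s. {u. (u, s) \<in> E})" unfolding Ein_def by force
  moreover have "inj_on (\<lambda>(a,b). (b,a)) (Sigma S (\<lambda>s. {u. (u, s) \<in> E}))" by (auto simp: inj_on_def)
  ultimately have "card (Ein E S) = card (Sigma S (\<lambda>s. {u. (u, s) \<in> E}))" by (simp add: card_image)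
  then show ?thesis using card_SigmaI[of S "\<lambda>s. {u. (u, s) \<in> E}"] assms inset_fin[OF assms(1)]
    by (simp add: indeg_def)
qed

lemma deg_le_maxdeg: "digraph V E \<Longrightarrow> v \<in> V \<Longrightarrow> deg E v \<le> maxdeg V E"
  unfolding maxdeg_def digraph_def by (intro Max_ge) auto

lemma maxdeg_pos: assumes "digraph V E" "E \<noteq> {}" shows "maxdeg V E \<ge> 1"
proof -
  obtain u v where uv: "(u,v) \<in> E" using assms(2) by auto
  then have uV: "u \<in> V" using assms(1) unfolding digraph_def by auto
  have "{w. (u, w) \<in> E} \<noteq> {}" using uv by auto
  then have "outdeg E u \<ge> 1" unfolding outdeg_def using outset_fin[OF assms(1)]
    by (simp add: Suc_leI card_gt_0_iff)
  then have "deg E u \<ge> 1" by (simp add: deg_def)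
  then show ?thesis using deg_le_maxdeg[OF assms(1) uV] by linarith
qed

lemma indep_sets_fin: assumes "digraph V E" shows "finite (indep_sets V E)"
proof -
  have "indep_sets V E \<subseteq> Pow V" unfolding indep_sets_def Vstar_def by blast
  moreover have "finite (Pow V)" using assms unfolding digraph_def by simp
  ultimately show ?thesis by (rule finite_subset)
qed

lemma indep_sub: "S \<in> indep_sets V E \<Longrightarrow> S \<subseteq> V"
  unfolding indep_sets_def Vstar_def by auto

lemma indep_fin: "digraph V E \<Longrightarrow> S \<in> indep_sets V E \<Longrightarrow> finite S"
  using indep_sub unfolding digraph_def by (metis finite_subset)

lemma indep_deg: "S \<in> indep_sets V E \<Longrightarrow> s \<in> S \<Longrightarrow> deg E s = maxdeg V E"
  unfolding indep_sets_def Vstar_def by auto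

lemma indep_no_edge: "S \<in> indep_sets V E \<Longrightarrow> u \<in> S \<Longrightarrow> v \<in> S \<Longrightarrow> (u,v) \<notin> E"
  unfolding indep_sets_def by auto

lemma card_ES: assumes "digraph V E" "S \<in> indep_sets V E"
  shows "card (Eout E S \<union> Ein E S) = maxdeg V E * card S"
proof -
  have fS: "finite S" using indep_fin assms by blast
  have fE: "finite E" using digraph_finE assms by blast
  have disj: "Eout E S \<inter> Ein E S = {}" unfolding Eout_def Ein_def
    using indep_no_edge[OF assms(2)] by auto
  have "card (Eout E S \<union> Ein E S) = card (Eout E S) + card (Ein E S)"
    by (rule card_Un_disjoint) (use fE disj in \<open>auto simp: Eout_def Ein_def\<close>)
  also have "\<dots> = (\<Sum>s\<in>S. deg E s)" using card_Eout[OF assms(1) fS] card_Ein[OF assms(1) fS]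
    by (simp add: deg_def sum.distrib)
  also have "\<dots> = (\<Sum>s\<in>S. maxdeg V E)" using indep_deg[OF assms(2)] by simp
  finally show ?thesis by simp
qed

lemma card_Eout_le: assumes "digraph V E" "S \<in> indep_sets V E"
  shows "card (Eout E S) \<le> maxdeg V E * card (Nout V E S)"
proof -
  have fN: "finite (Nout V E S)" using assms(1) unfolding digraph_def Nout_def by auto
  have "Eout E S \<subseteq> (\<Union>w\<in>Nout V E S. {e\<in>E. snd e = w})"
  proof
    fix e assume e: "e \<in> Eout E S"
    obtain a b where ab: "e = (a,b)" by force
    have "a \<in> S" "(a,b) \<in> E" using e ab by (auto simp: Eout_def)
    moreover have "b \<notin> S" using indep_no_edge[OF assms(2)] calculation by blast
    moreover have "b \<in> V" using calculation assms(1) by (auto simp: digraph_def)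
    ultimately show "e \<in> (\<Union>w\<in>Nout V E S. {e\<in>E. snd e = w})" using ab by (auto simp: Nout_def)
  qed
  then have "card (Eout E S) \<le> card (\<Union>w\<in>Nout V E S. {e\<in>E. snd e = w})"
    by (rule card_mono[rotated]) (use fN digraph_finE[OF assms(1)] in auto)
  also have "\<dots> \<le> (\<Sum>w\<in>Nout V E S. card {e\<in>E. snd e = w})" by (rule card_UN_le[OF fN])
  also have "\<dots> \<le> (\<Sum>w\<in>Nout V E S. maxdeg V E)"
  proof (rule sum_mono)
    fix w assume w: "w \<in> Nout V E S"
    have "{e\<in>E. snd e = w} = (\<lambda>u. (u,w)) ` {u. (u, w) \<in> E}" by force
    then have "card {e\<in>E. snd e = w} = indeg E w" unfolding indeg_def
      by (simp add: card_image inj_on_def)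
    also have "\<dots> \<le> deg E w" by (simp add: deg_def)
    also have "\<dots> \<le> maxdeg V E" using deg_le_maxdeg[OF assms(1)] w by (auto simp: Nout_def)
    finally show "card {e\<in>E. snd e = w} \<le> maxdeg V E" .
  qed
  finally show ?thesis by (simp add: mult.commute)
qed

lemma card_Ein_le: assumes "digraph V E" "S \<in> indep_sets V E"
  shows "card (Ein E S) \<le> maxdeg V E * card (Nin V E S)"
proof -
  have fN: "finite (Nin V E S)" using assms(1) unfolding digraph_def Nin_def by auto
  have "Ein E S \<subseteq> (\<Union>w\<in>Nin V E S. {e\<in>E. fst e = w})"
  proof
    fix e assume e: "e \<in> Ein E S"
    obtain a b where ab: "e = (a,b)" by force
    have "b \<in> S" "(a,b) \<in> E" using e ab by (auto simp: Ein_def)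
    moreover have "a \<notin> S" using indep_no_edge[OF assms(2)] calculation by blast
    moreover have "a \<in> V" using calculation assms(1) by (auto simp: digraph_def)
    ultimately show "e \<in> (\<Union>w\<in>Nin V E S. {e\<in>E. fst e = w})" using ab by (auto simp: Nin_def)
  qed
  then have "card (Ein E S) \<le> card (\<Union>w\<in>Nin V E S. {e\<in>E. fst e = w})"
    by (rule card_mono[rotated]) (use fN digraph_finE[OF assms(1)] in auto)
  also have "\<dots> \<le> (\<Sum>w\<in>Nin V E S. card {e\<in>E. fst e = w})" by (rule card_UN_le[OF fN])
  also have "\<dots> \<le> (\<Sum>w\<in>Nin V E S. maxdeg V E)"
  proof (rule sum_mono)
    fix w assume w: "w \<in> Nin V E S"
    have "{e\<in>E. fst e = w} = (\<lambda>u. (w,u)) ` {u. (w, u) \<in> E}" by force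
    then have "card {e\<in>E. fst e = w} = outdeg E w" unfolding outdeg_def
      by (simp add: card_image inj_on_def)
    also have "\<dots> \<le> deg E w" by (simp add: deg_def)
    also have "\<dots> \<le> maxdeg V E" using deg_le_maxdeg[OF assms(1)] w by (auto simp: Nin_def)
    finally show "card {e\<in>E. fst e = w} \<le> maxdeg V E" .
  qed
  finally show ?thesis by (simp add: mult.commute)
qed

lemma card_S_le_AB: assumes "digraph V E" "E \<noteq> {}" "S \<in> indep_sets V E"
  shows "card S \<le> card (Nout V E S) + card (Nin V E S)"
proof -
  have "maxdeg V E * card S = card (Eout E S \<union> Ein E S)" using card_ES assms by metis
  also have "\<dots> \<le> card (Eout E S) + card (Ein E S)" by (rule card_Un_le)
  also have "\<dots> \<le> maxdeg V E * (card (Nout V E S) + card (Nin V E S))"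
    using card_Eout_le[OF assms(1,3)] card_Ein_le[OF assms(1,3)] by (simp add: algebra_simps)
  finally show ?thesis using maxdeg_pos[OF assms(1,2)] by simp
qed

lemma card_S_split: assumes "digraph V E" "E \<noteq> {}" "S \<in> indep_sets V E"
  shows "vplus E S + vminus E S + vpm E S = card S"
proof -
  have fS: "finite S" using indep_fin assms by blast
  have nz: "(\<exists>u. (u, s) \<in> E) \<or> (\<exists>u. (s, u) \<in> E)" if "s \<in> S" for s
  proof (rule ccontr)
    assume "\<not> ?thesis"
    then have "indeg E s = 0" "outdeg E s = 0" by (auto simp: indeg_def outdeg_def)
    then have "deg E s = 0" by (simp add: deg_def)
    then show False using indep_deg[OF assms(3) that] maxdeg_pos[OF assms(1,2)] by simp
  qed
  let ?A = "{v\<in>S. \<not> (\<exists>u. (u, v) \<in> E)}"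
  let ?B = "{v\<in>S. \<not> (\<exists>u. (v, u) \<in> E)}"
  let ?C = "{v\<in>S. (\<exists>u. (u, v) \<in> E) \<and> (\<exists>u. (v, u) \<in> E)}"
  have e1: "S = (?A \<union> ?B) \<union> ?C" by auto
  have d1: "?A \<inter> ?B = {}" using nz by auto
  have d2: "(?A \<union> ?B) \<inter> ?C = {}" by auto
  have "card S = card (?A \<union> ?B) + card ?C"
    by (subst e1, rule card_Un_disjoint) (use fS d2 in auto)
  also have "card (?A \<union> ?B) = card ?A + card ?B"
    by (rule card_Un_disjoint) (use fS d1 in auto)
  finally have "card S = card ?A + card ?B + card ?C" .
  then show ?thesis by (simp add: vplus_def vminus_def vpm_def)
qed

definition tm :: "'v set \<Rightarrow> ('v \<times> 'v) set \<Rightarrow> 'v set \<Rightarrow> real \<Rightarrow> real \<Rightarrow> real \<Rightarrow> real \<Rightarrow> real" where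
  "tm V E S x1 x2 y1 y2 = x1 ^ vplus E S * x2 ^ vminus E S * (min x1 x2) ^ vpm E S *
      y1 ^ card (Nout V E S) * y2 ^ card (Nin V E S)"

lemma fH_tm: "fH V E x1 x2 y1 y2 = (\<Sum>S\<in>indep_sets V E. tm V E S x1 x2 y1 y2)"
  unfolding fH_def tm_def by simp

lemma tm_nonneg: "0 \<le> x1 \<Longrightarrow> 0 \<le> x2 \<Longrightarrow> 0 \<le> y1 \<Longrightarrow> 0 \<le> y2 \<Longrightarrow> 0 \<le> tm V E S x1 x2 y1 y2"
  unfolding tm_def by simp

lemma tm_empty: "tm V E {} x1 x2 y1 y2 = 1"
  unfolding tm_def vplus_def vminus_def vpm_def Nout_def Nin_def by simp

lemma empty_indep: "{} \<in> indep_sets V E"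
  unfolding indep_sets_def by simp

lemma tm_scale: assumes "digraph V E" "E \<noteq> {}" "S \<in> indep_sets V E" "0 \<le> l"
  shows "tm V E S (l*x1) (l*x2) y1 y2 = l ^ card S * tm V E S x1 x2 y1 y2"
proof -
  have m: "min (l*x1) (l*x2) = l * min x1 x2" using assms(4) by (simp add: min_mult_distrib_left)
  have "l ^ card S = l ^ vplus E S * l ^ vminus E S * l ^ vpm E S"
    using card_S_split[OF assms(1-3)] by (metis power_add)
  then show ?thesis unfolding tm_def m by (simp add: power_mult_distrib)
qed

lemma fH_scale: assumes "digraph V E" "E \<noteq> {}" "0 \<le> l"
  shows "fH V E (l*x1) (l*x2) y1 y2 = (\<Sum>S\<in>indep_sets V E. l ^ card S * tm V E S x1 x2 y1 y2)"
  unfolding fH_tm using tm_scale[OF assms(1,2) _ assms(3)] by simp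

lemma fH_split: assumes "digraph V E"
  shows "(\<Sum>S\<in>indep_sets V E. f S) = f {} + (\<Sum>S\<in>indep_sets V E - {{}}. f S)"
  using sum.remove[OF indep_sets_fin[OF assms] empty_indep] by simp

lemma fH_zero: assumes "digraph V E" "E \<noteq> {}"
  shows "fH V E 0 0 y1 y2 = 1"
proof -
  have "fH V E (0*1) (0*1) y1 y2 = (\<Sum>S\<in>indep_sets V E. 0 ^ card S * tm V E S 1 1 y1 y2)"
    by (rule fH_scale[OF assms]) simp
  also have "\<dots> = 1 + (\<Sum>S\<in>indep_sets V E - {{}}. 0 ^ card S * tm V E S 1 1 y1 y2)"
    by (subst fH_split[OF assms(1)]) (simp add: tm_empty)
  also have "(\<Sum>S\<in>indep_sets V E - {{}}. 0 ^ card S * tm V E S 1 1 y1 y2) = 0"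
  proof (rule sum.neutral, rule ballI)
    fix S assume "S \<in> indep_sets V E - {{}}"
    then have "card S \<noteq> 0" using indep_fin[OF assms(1)] by auto
    then show "(0::real) ^ card S * tm V E S 1 1 y1 y2 = 0" by simp
  qed
  finally show ?thesis by simp
qed

lemma fH_ge_scale: assumes "digraph V E" "E \<noteq> {}" "1 \<le> l" "0 \<le> x1" "0 \<le> x2" "0 \<le> y1" "0 \<le> y2"
  shows "fH V E (l*x1) (l*x2) y1 y2 - 1 \<ge> l * (fH V E x1 x2 y1 y2 - 1)"
proof -
  have "fH V E (l*x1) (l*x2) y1 y2 = 1 + (\<Sum>S\<in>indep_sets V E - {{}}. l ^ card S * tm V E S x1 x2 y1 y2)"
    using assms(3) by (subst fH_scale[OF assms(1,2)], simp, subst fH_split[OF assms(1)], simp add: tm_empty)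
  moreover have "fH V E x1 x2 y1 y2 = 1 + (\<Sum>S\<in>indep_sets V E - {{}}. tm V E S x1 x2 y1 y2)"
    unfolding fH_tm by (subst fH_split[OF assms(1)], simp add: tm_empty)
  moreover have "l * (\<Sum>S\<in>indep_sets V E - {{}}. tm V E S x1 x2 y1 y2)
      \<le> (\<Sum>S\<in>indep_sets V E - {{}}. l ^ card S * tm V E S x1 x2 y1 y2)"
    unfolding sum_distrib_left
  proof (rule sum_mono)
    fix S assume "S \<in> indep_sets V E - {{}}"
    then have "card S \<ge> 1" using indep_fin[OF assms(1)] by (auto simp: Suc_le_eq card_gt_0_iff)
    then have "l \<le> l ^ card S" using assms(3)
      by (metis power_one_right power_increasing)
    then show "l * tm V E S x1 x2 y1 y2 \<le> l ^ card S * tm V E S x1 x2 y1 y2"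
      by (rule mult_right_mono) (rule tm_nonneg, use assms in auto)
  qed
  ultimately show ?thesis by simp
qed

lemma tm_yscale: assumes "digraph V E" "E \<noteq> {}" "S \<in> indep_sets V E" "0 < s" "s \<le> 1"
  "0 \<le> x1" "0 \<le> x2" "0 \<le> y1" "0 \<le> y2"
  shows "tm V E S x1 x2 y1 y2 \<le> tm V E S (s*x1) (s*x2) (y1/s) (y2/s)"
proof -
  let ?A = "card (Nout V E S)" and ?B = "card (Nin V E S)"
  have "tm V E S (s*x1) (s*x2) (y1/s) (y2/s) = s ^ card S * tm V E S x1 x2 (y1/s) (y2/s)"
    using tm_scale[OF assms(1-3)] assms(4) by simp
  also have "tm V E S x1 x2 (y1/s) (y2/s) = tm V E S x1 x2 y1 y2 / s ^ (?A + ?B)"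
    unfolding tm_def by (simp add: power_divide power_add)
  finally have eq: "tm V E S (s*x1) (s*x2) (y1/s) (y2/s) = (s ^ card S / s ^ (?A + ?B)) * tm V E S x1 x2 y1 y2"
    by simp
  have "s ^ (?A + ?B) \<le> s ^ card S" using card_S_le_AB[OF assms(1-3)] assms(4,5)
    by (intro power_decreasing) auto
  then have "1 \<le> s ^ card S / s ^ (?A + ?B)" using assms(4) by simp
  then have "1 * tm V E S x1 x2 y1 y2 \<le> (s ^ card S / s ^ (?A + ?B)) * tm V E S x1 x2 y1 y2"
    by (rule mult_right_mono) (rule tm_nonneg, use assms in auto)
  then show ?thesis using eq by simp
qed

lemma ivt_scale: assumes "digraph V E" "E \<noteq> {}" "0 \<le> x1" "0 \<le> x2" "0 < \<delta>"
  "fH V E x1 x2 y1 y2 \<ge> 1 + \<delta>"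
  shows "\<exists>l. 0 \<le> l \<and> l \<le> 1 \<and> fH V E (l*x1) (l*x2) y1 y2 = 1 + \<delta>"
proof -
  let ?g = "\<lambda>l. fH V E (l*x1) (l*x2) y1 y2"
  have "continuous_on {0..1} (\<lambda>l. \<Sum>S\<in>indep_sets V E. l ^ card S * tm V E S x1 x2 y1 y2)"
    by (intro continuous_intros)
  then have c: "continuous_on {0..1} ?g"
    by (rule continuous_on_cong[THEN iffD1, rotated 2]) (auto simp: fH_scale[OF assms(1,2)])
  have "?g 0 = 1" using fH_zero[OF assms(1,2)] by simp
  then have "?g 0 \<le> 1 + \<delta>" using assms by simp
  moreover have "1 + \<delta> \<le> ?g 1" using assms by simp
  ultimately show ?thesis using IVT'[of ?g 0 "1+\<delta>" 1, OF _ _ _ c] by auto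
qed

lemma Vstar_ne: assumes "digraph V E" "E \<noteq> {}" shows "\<exists>v. v \<in> Vstar V E"
proof -
  have "V \<noteq> {}" using assms unfolding digraph_def by auto
  then have "maxdeg V E \<in> deg E ` V" unfolding maxdeg_def using assms(1)
    by (intro Max_in) (auto simp: digraph_def)
  then show ?thesis unfolding Vstar_def by auto
qed

lemma FH_edge_ne: assumes "digraph V E" "E \<noteq> {}" "0 < \<delta>"
  shows "\<exists>x1 x2. 0 \<le> x1 \<and> 0 \<le> x2 \<and> fH V E x1 x2 1 1 = 1 + \<delta>"
proof -
  obtain v where v: "v \<in> Vstar V E" using Vstar_ne[OF assms(1,2)] by blast
  have vi: "{v} \<in> indep_sets V E" using v assms(1) unfolding indep_sets_def digraph_def by auto
  have "fH V E \<delta> \<delta> 1 1 = (\<Sum>S\<in>indep_sets V E. tm V E S \<delta> \<delta> 1 1)" by (rule fH_tm)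
  also have "\<dots> \<ge> (\<Sum>S\<in>{{},{v}}. tm V E S \<delta> \<delta> 1 1)"
    by (rule sum_mono2) (use indep_sets_fin[OF assms(1)] vi empty_indep assms(3) in \<open>auto intro: tm_nonneg\<close>)
  moreover have "tm V E {v} \<delta> \<delta> 1 1 = \<delta>"
    using tm_scale[OF assms(1,2) vi, of \<delta> 1 1 1 1] assms(3) by (simp add: tm_def)
  ultimately have "fH V E \<delta> \<delta> 1 1 \<ge> 1 + \<delta>" using tm_empty[of V E \<delta> \<delta> 1 1] by simp
  then obtain l where "0 \<le> l" "fH V E (l*\<delta>) (l*\<delta>) 1 1 = 1 + \<delta>"
    using ivt_scale[OF assms(1,2), of \<delta> \<delta> \<delta>] assms(3) by auto
  then show ?thesis using assms(3) by (intro exI[of _ "l*\<delta>"]) auto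
qed

lemma to_edge: assumes "digraph V E" "E \<noteq> {}" "0 < \<delta>"
  "0 \<le> x1" "0 \<le> x2" "0 \<le> y1" "y1 \<le> 1" "0 \<le> y2" "y2 \<le> 1" "fH V E x1 x2 y1 y2 = 1 + \<delta>"
  shows "\<exists>x1' x2' y1' y2'. 0 \<le> x1' \<and> 0 \<le> x2' \<and> 0 \<le> y1' \<and> y1' \<le> 1 \<and> 0 \<le> y2' \<and> y2' \<le> 1 \<and>
     max y1' y2' = 1 \<and> fH V E x1' x2' y1' y2' = 1 + \<delta> \<and> x1' * y1' + x2' * y2' \<le> x1 * y1 + x2 * y2"
proof -
  let ?s = "max y1 y2"
  have sp: "?s > 0"
  proof (rule ccontr)
    assume "\<not> ?s > 0"
    then have y0: "y1 = 0" "y2 = 0" using assms by auto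
    have "fH V E x1 x2 0 0 = 1"
    proof -
      have "fH V E x1 x2 0 0 = tm V E {} x1 x2 0 0 + (\<Sum>S\<in>indep_sets V E - {{}}. tm V E S x1 x2 0 0)"
        unfolding fH_tm by (rule fH_split[OF assms(1)])
      also have "(\<Sum>S\<in>indep_sets V E - {{}}. tm V E S x1 x2 0 0) = 0"
      proof (rule sum.neutral, rule ballI)
        fix S assume S: "S \<in> indep_sets V E - {{}}"
        then have "card S \<noteq> 0" using indep_fin[OF assms(1)] by auto
        then have "card (Nout V E S) + card (Nin V E S) \<noteq> 0" using card_S_le_AB[OF assms(1,2)] S by force
        then show "tm V E S x1 x2 0 0 = 0" unfolding tm_def by auto
      qed
      finally show ?thesis using tm_empty by simp
    qed
    then show False using assms y0 by simp
  qed
  have s1: "?s \<le> 1" using assms by simp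
  have "fH V E x1 x2 y1 y2 \<le> fH V E (?s*x1) (?s*x2) (y1/?s) (y2/?s)"
    unfolding fH_tm by (rule sum_mono, rule tm_yscale) (use assms sp s1 in auto)
  then have "1 + \<delta> \<le> fH V E (?s*x1) (?s*x2) (y1/?s) (y2/?s)" using assms by simp
  then obtain l where l: "0 \<le> l" "l \<le> 1" "fH V E (l*(?s*x1)) (l*(?s*x2)) (y1/?s) (y2/?s) = 1 + \<delta>"
    using ivt_scale[OF assms(1,2), of "?s*x1" "?s*x2" \<delta>] assms sp by auto
  have cost: "(l*(?s*x1)) * (y1/?s) + (l*(?s*x2)) * (y2/?s) = l * (x1 * y1 + x2 * y2)"
    using sp by (simp add: field_simps)
  have lc: "l * (x1 * y1 + x2 * y2) \<le> 1 * (x1 * y1 + x2 * y2)"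
    using l assms by (intro mult_right_mono) auto
  moreover have "max (y1/?s) (y2/?s) = 1"
  proof (cases "y1 \<le> y2")
    case True then show ?thesis using sp by (simp add: max_def divide_right_mono)
  next
    case False then show ?thesis using sp by (simp add: max_def divide_right_mono)
  qed
  moreover have "y1/?s \<le> 1" "y2/?s \<le> 1" using sp by (simp_all add: divide_le_eq_1)
  moreover have "0 \<le> y1/?s" "0 \<le> y2/?s" using sp assms(6,8) by simp_all
  moreover have "0 \<le> l*(?s*x1)" "0 \<le> l*(?s*x2)" using sp l(1) assms(4,5) by simp_all
  ultimately have "0 \<le> l*(?s*x1) \<and> 0 \<le> l*(?s*x2) \<and> 0 \<le> y1/?s \<and> y1/?s \<le> 1 \<and> 0 \<le> y2/?s \<and> y2/?s \<le> 1 \<and>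
     max (y1/?s) (y2/?s) = 1 \<and> fH V E (l*(?s*x1)) (l*(?s*x2)) (y1/?s) (y2/?s) = 1 + \<delta> \<and>
     (l*(?s*x1)) * (y1/?s) + (l*(?s*x2)) * (y2/?s) \<le> x1 * y1 + x2 * y2"
    using l(3) apply (intro conjI)
    apply (assumption)+
    using lc by (subst cost) simp
  then show ?thesis by blast
qed

lemma part2: assumes "digraph V E" "E \<noteq> {}" "0 < \<delta>"
  shows "FH_edge V E \<delta> = FH V E \<delta>"
proof -
  let ?T = "{x1 * y1 + x2 * y2 | x1 x2 y1 y2.
      x1 \<ge> 0 \<and> x2 \<ge> 0 \<and> 0 \<le> y1 \<and> y1 \<le> 1 \<and> 0 \<le> y2 \<and> y2 \<le> 1 \<and>
      fH V E x1 x2 y1 y2 = 1 + \<delta>}"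
  let ?T' = "{x1 * y1 + x2 * y2 | x1 x2 y1 y2.
      x1 \<ge> 0 \<and> x2 \<ge> 0 \<and> 0 \<le> y1 \<and> y1 \<le> 1 \<and> 0 \<le> y2 \<and> y2 \<le> 1 \<and>
      max y1 y2 = 1 \<and> fH V E x1 x2 y1 y2 = 1 + \<delta>}"
  have sub: "?T' \<subseteq> ?T" by blast
  obtain a1 a2 where a: "0 \<le> a1" "0 \<le> a2" "fH V E a1 a2 1 1 = 1 + \<delta>" using FH_edge_ne[OF assms] by blast
  have "a1 * 1 + a2 * 1 \<in> ?T'" using a by (intro CollectI exI[of _ a1] exI[of _ a2] exI[of _ 1]) simp
  then have ne: "?T' \<noteq> {}" by blast
  have bT: "bdd_below ?T" by (rule bdd_belowI[of _ 0]) (auto intro!: add_nonneg_nonneg mult_nonneg_nonneg)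
  have bT': "bdd_below ?T'" by (rule bdd_belowI[of _ 0]) (auto intro!: add_nonneg_nonneg mult_nonneg_nonneg)
  have "Inf ?T \<le> Inf ?T'" by (rule cInf_superset_mono[OF ne bT sub])
  moreover have "Inf ?T' \<le> Inf ?T"
  proof (rule cInf_mono)
    show "?T \<noteq> {}" using ne sub by blast
    show "bdd_below ?T'" by (rule bT')
    fix b assume "b \<in> ?T"
    then obtain x1 x2 y1 y2 where b: "b = x1 * y1 + x2 * y2" "x1 \<ge> 0" "x2 \<ge> 0" "0 \<le> y1" "y1 \<le> 1"
      "0 \<le> y2" "y2 \<le> 1" "fH V E x1 x2 y1 y2 = 1 + \<delta>" by blast
    then obtain x1' x2' y1' y2' where p: "0 \<le> x1'" "0 \<le> x2'" "0 \<le> y1'" "y1' \<le> 1" "0 \<le> y2'" "y2' \<le> 1"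
      "max y1' y2' = 1" "fH V E x1' x2' y1' y2' = 1 + \<delta>" "x1' * y1' + x2' * y2' \<le> x1 * y1 + x2 * y2"
      using to_edge[OF assms, of x1 x2 y1 y2] by blast
    then have "x1' * y1' + x2' * y2' \<in> ?T'" by blast
    then show "\<exists>a\<in>?T'. a \<le> b" using p(9) b(1) by blast
  qed
  ultimately show ?thesis unfolding FH_def FH_edge_def by simp
qed

lemma bad_card:
  assumes fV: "finite V" and v: "v \<in> V" and u: "u \<in> V" and uv: "u \<noteq> v"
    and fC: "\<And>w. w \<in> V \<Longrightarrow> finite (C w)"
  shows "real (card {\<phi>\<in>PiE V C. \<phi> u = \<phi> v}) \<le> real (card (PiE V C)) / real (card (C v))"
proof (cases "C v = {}")
  case True
  then have "PiE V C = {}" using v by (auto simp: PiE_def Pi_def)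
  then show ?thesis by simp
next
  case False
  then have cp: "card (C v) > 0" using fC[OF v] by (simp add: card_gt_0_iff)
  let ?B = "{\<phi>\<in>PiE V C. \<phi> u = \<phi> v}"
  let ?f = "\<lambda>(\<phi>, c). \<phi>(v := c)"
  have fP: "finite (PiE V C)" using fV fC by (intro finite_PiE) auto
  have inj: "inj_on ?f (?B \<times> C v)"
  proof (rule inj_onI, clarify)
    fix \<phi> c \<psi> d
    assume h: "\<phi> \<in> PiE V C" "\<phi> u = \<phi> v" "c \<in> C v" "\<psi> \<in> PiE V C" "\<psi> u = \<psi> v" "d \<in> C v"
      "\<phi>(v := c) = \<psi>(v := d)"
    have cd: "c = d" using fun_cong[OF h(7), of v] by simp
    have "\<phi> u = \<psi> u" using fun_cong[OF h(7), of u] uv by simp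
    then have "\<phi> v = \<psi> v" using h by simp
    have "\<phi> x = \<psi> x" for x
    proof (cases "x = v")
      case True then show ?thesis using \<open>\<phi> v = \<psi> v\<close> by simp
    next
      case False then show ?thesis using fun_cong[OF h(7), of x] by simp
    qed
    then have "\<phi> = \<psi>" by (rule ext)
    then show "\<phi> = \<psi> \<and> c = d" using cd by simp
  qed
  have img: "?f ` (?B \<times> C v) \<subseteq> PiE V C"
    using v by (auto simp: PiE_def Pi_def extensional_def)
  have "card (?B \<times> C v) \<le> card (PiE V C)" by (rule card_inj_on_le[OF inj img fP])
  then have "card ?B * card (C v) \<le> card (PiE V C)" by (simp add: card_cartesian_product)
  then have "real (card ?B * card (C v)) \<le> real (card (PiE V C))"
    by (rule of_nat_mono)
  then have "real (card ?B) * real (card (C v)) \<le> real (card (PiE V C))" by simp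
  then show ?thesis using cp by (simp add: pos_le_divide_eq)
qed

lemma good_card:
  assumes fV: "finite V" and fE: "finite E" and EV: "\<And>e. e \<in> E \<Longrightarrow> fst e \<in> V \<and> snd e \<in> V \<and> fst e \<noteq> snd e"
    and fC: "\<And>w. w \<in> V \<Longrightarrow> finite (C w)"
  shows "(\<Prod>w\<in>V. real (card (C w))) * (1 - (\<Sum>e\<in>E. 1 / real (card (C (snd e)))))
     \<le> real (card {\<phi>\<in>PiE V C. \<forall>e\<in>E. \<phi> (fst e) \<noteq> \<phi> (snd e)})"
proof -
  let ?G = "{\<phi>\<in>PiE V C. \<forall>e\<in>E. \<phi> (fst e) \<noteq> \<phi> (snd e)}"
  let ?bad = "\<lambda>e. {\<phi>\<in>PiE V C. \<phi> (fst e) = \<phi> (snd e)}"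
  let ?P = "\<Prod>w\<in>V. real (card (C w))"
  have fP: "finite (PiE V C)" using fV fC by (intro finite_PiE) auto
  have fin: "finite (?G \<union> (\<Union>e\<in>E. ?bad e))" by (rule finite_subset[OF _ fP]) blast
  have "PiE V C \<subseteq> ?G \<union> (\<Union>e\<in>E. ?bad e)" by blast
  then have "card (PiE V C) \<le> card (?G \<union> (\<Union>e\<in>E. ?bad e))"
    by (rule card_mono[OF fin])
  also have "\<dots> \<le> card ?G + card (\<Union>e\<in>E. ?bad e)" by (rule card_Un_le)
  also have "card (\<Union>e\<in>E. ?bad e) \<le> (\<Sum>e\<in>E. card (?bad e))" by (rule card_UN_le[OF fE])
  finally have "card (PiE V C) \<le> card ?G + (\<Sum>e\<in>E. card (?bad e))" by simp
  then have "real (card (PiE V C)) \<le> real (card ?G + (\<Sum>e\<in>E. card (?bad e)))"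
    by (rule of_nat_mono)
  then have 1: "real (card (PiE V C)) \<le> real (card ?G) + (\<Sum>e\<in>E. real (card (?bad e)))"
    by simp
  have 2: "(\<Sum>e\<in>E. real (card (?bad e))) \<le> (\<Sum>e\<in>E. real (card (PiE V C)) / real (card (C (snd e))))"
  proof (rule sum_mono)
    fix e assume e: "e \<in> E"
    show "real (card (?bad e)) \<le> real (card (PiE V C)) / real (card (C (snd e)))"
      by (rule bad_card[of V "snd e" "fst e" C]) (use fV fC EV[OF e] in auto)
  qed
  have 3: "real (card (PiE V C)) = ?P" using card_PiE[OF fV, of C] by simp
  have 4: "?P * (1 - (\<Sum>e\<in>E. 1 / real (card (C (snd e))))) = ?P - (\<Sum>e\<in>E. ?P / real (card (C (snd e))))"
    by (simp add: right_diff_distrib sum_distrib_left)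
  have 5: "(\<Sum>e\<in>E. real (card (?bad e))) \<le> (\<Sum>e\<in>E. ?P / real (card (C (snd e))))"
    using 2 unfolding 3 .
  show ?thesis using 1 5 3 4 by linarith
qed

lemma hom_lower:
  fixes C :: "'k \<Rightarrow> 'v \<Rightarrow> nat set" and L :: "'k \<Rightarrow> real" and F :: "'k \<Rightarrow> ('v \<times> 'v) set"
  assumes H: "digraph V E" and fK: "finite K"
    and Qnn: "\<forall>i<n. \<forall>j<n. 0 \<le> Q i j"
    and Csub: "\<And>k w. k \<in> K \<Longrightarrow> w \<in> V \<Longrightarrow> C k w \<subseteq> {..<n}"
    and disj: "\<And>k k'. k \<in> K \<Longrightarrow> k' \<in> K \<Longrightarrow> k \<noteq> k' \<Longrightarrow> \<exists>w\<in>V. C k w \<inter> C k' w = {}"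
    and Lb: "\<And>k \<phi>. k \<in> K \<Longrightarrow> \<phi> \<in> PiE V (C k) \<Longrightarrow> (\<forall>e\<in>E - F k. \<phi> (fst e) \<noteq> \<phi> (snd e)) \<Longrightarrow>
          L k \<le> (\<Prod>e\<in>E. Q (\<phi> (fst e)) (\<phi> (snd e)))"
    and Lnn: "\<And>k. k \<in> K \<Longrightarrow> 0 \<le> L k"
  shows "(\<Sum>k\<in>K. L k * ((\<Prod>w\<in>V. real (card (C k w))) * (1 - (\<Sum>e\<in>E - F k. 1 / real (card (C k (snd e)))))))
     \<le> (\<Sum>\<phi>\<in>PiE V (\<lambda>_. {..<n}). \<Prod>e\<in>E. Q (\<phi> (fst e)) (\<phi> (snd e)))"
proof -
  define G where "G k = {\<phi>\<in>PiE V (C k). \<forall>e\<in>E - F k. \<phi> (fst e) \<noteq> \<phi> (snd e)}" for k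
  define f where "f \<phi> = (\<Prod>e\<in>E. Q (\<phi> (fst e)) (\<phi> (snd e)))" for \<phi> :: "'v \<Rightarrow> nat"
  have fV: "finite V" using H by (simp add: digraph_def)
  have fE: "finite E" using digraph_finE[OF H] .
  have EV: "fst e \<in> V \<and> snd e \<in> V \<and> fst e \<noteq> snd e" if "e \<in> E" for e
    using H that unfolding digraph_def by (cases e) auto
  have fC: "finite (C k w)" if "k \<in> K" "w \<in> V" for k w
    using Csub[OF that] finite_subset by blast
  have fG: "finite (G k)" if "k \<in> K" for k
  proof -
    have "finite (PiE V (C k))" using fV fC[OF that] by (intro finite_PiE) auto
    then show ?thesis unfolding G_def by simp
  qed
  have GP: "G k \<subseteq> PiE V (\<lambda>_. {..<n})" if "k \<in> K" for k
    using Csub[OF that] unfolding G_def by (auto simp: PiE_def Pi_def)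
  have s1: "L k * ((\<Prod>w\<in>V. real (card (C k w))) * (1 - (\<Sum>e\<in>E - F k. 1 / real (card (C k (snd e))))))
      \<le> sum f (G k)" if k: "k \<in> K" for k
  proof -
    have "(\<Prod>w\<in>V. real (card (C k w))) * (1 - (\<Sum>e\<in>E - F k. 1 / real (card (C k (snd e)))))
        \<le> real (card (G k))" unfolding G_def
      by (rule good_card) (use fV fE EV fC[OF k] in auto)
    then have "L k * ((\<Prod>w\<in>V. real (card (C k w))) * (1 - (\<Sum>e\<in>E - F k. 1 / real (card (C k (snd e))))))
        \<le> L k * real (card (G k))" by (rule mult_left_mono) (rule Lnn[OF k])
    also have "\<dots> = (\<Sum>\<phi>\<in>G k. L k)" by simp
    also have "\<dots> \<le> sum f (G k)"
      by (rule sum_mono) (use Lb[OF k] in \<open>auto simp: G_def f_def\<close>)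
    finally show ?thesis .
  qed
  have dG: "\<forall>i\<in>K. \<forall>j\<in>K. i \<noteq> j \<longrightarrow> G i \<inter> G j = {}"
  proof (intro ballI impI)
    fix i j assume "i \<in> K" "j \<in> K" "i \<noteq> j"
    then obtain w where w: "w \<in> V" "C i w \<inter> C j w = {}" using disj by blast
    show "G i \<inter> G j = {}"
    proof (rule ccontr)
      assume "G i \<inter> G j \<noteq> {}"
      then obtain \<phi> where "\<phi> \<in> G i" "\<phi> \<in> G j" by blast
      then have "\<phi> w \<in> C i w" "\<phi> w \<in> C j w" using w(1) unfolding G_def by (auto simp: PiE_def Pi_def)
      then show False using w(2) by blast
    qed
  qed
  have "(\<Sum>k\<in>K. L k * ((\<Prod>w\<in>V. real (card (C k w))) * (1 - (\<Sum>e\<in>E - F k. 1 / real (card (C k (snd e)))))))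
      \<le> (\<Sum>k\<in>K. sum f (G k))" by (rule sum_mono) (rule s1)
  also have "\<dots> = sum f (\<Union>(G ` K))" by (rule sum.UNION_disjoint[symmetric]) (use fK fG dG in auto)
  also have "\<dots> \<le> sum f (PiE V (\<lambda>_. {..<n}))"
  proof (rule sum_mono2)
    show "finite (PiE V (\<lambda>_. {..<n}))" using fV by (intro finite_PiE) auto
    show "\<Union>(G ` K) \<subseteq> PiE V (\<lambda>_. {..<n})" using GP by blast
    fix \<phi> assume "\<phi> \<in> PiE V (\<lambda>_. {..<n}) - \<Union>(G ` K)"
    then have "\<phi> \<in> PiE V (\<lambda>_. {..<n})" by simp
    then show "0 \<le> f \<phi>" unfolding f_def using Qnn EV
      by (intro prod_nonneg) (auto simp: PiE_def Pi_def)
  qed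
  finally show ?thesis unfolding f_def .
qed

lemma Ip_mat_bound:
  assumes p: "0 < p" "p < 1"
    and Q: "\<And>i j. i < n \<Longrightarrow> j < n \<Longrightarrow> i \<noteq> j \<Longrightarrow> Q i j = (if P i j then 1 else p)"
  shows "Ip_mat n p Q \<le> ln (1/p) * (\<Sum>i<n. \<Sum>j<n. if P i j then 1 else 0)"
proof -
  have lp: "ln (1/p) > 0" using p by simp
  have "Ip_mat n p Q = (\<Sum>i<n. \<Sum>j\<in>{..<n} - {i}. if P i j then ln (1/p) else 0)"
    unfolding Ip_mat_def
    by (intro sum.cong refl) (auto simp: Q Ip_one Ip_self[OF p])
  also have "\<dots> \<le> (\<Sum>i<n. \<Sum>j<n. if P i j then ln (1/p) else 0)"
    by (intro sum_mono sum_mono2) (use lp in auto)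
  also have "\<dots> = ln (1/p) * (\<Sum>i<n. \<Sum>j<n. if P i j then 1 else 0)"
    by (simp add: sum_distrib_left if_distrib cong: if_cong)
  finally show ?thesis .
qed

lemma count_prod:
  "(\<Sum>i<(n::nat). \<Sum>j<n. if A i \<and> B j then 1 else 0 :: real) = real (card {i. i < n \<and> A i}) * real (card {j. j < n \<and> B j})"
proof -
  have "(\<Sum>i<n. \<Sum>j<n. if A i \<and> B j then 1 else 0 :: real)
      = (\<Sum>i<n. \<Sum>j<n. (if A i then 1 else 0) * (if B j then 1 else 0 :: real))"
    by (intro sum.cong refl) auto
  also have "\<dots> = (\<Sum>i<n. if A i then 1 else 0 :: real) * (\<Sum>j<n. if B j then 1 else 0 :: real)"
    by (simp add: sum_product)
  also have "(\<Sum>i<n. if A i then 1 else 0 :: real) = real (card {i. i < n \<and> A i})"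
  proof -
    have "{i. i < n \<and> A i} = {i\<in>{..<n}. A i}" by auto
    then show ?thesis using sum.inter_filter[OF finite_lessThan[of n], of "\<lambda>_. 1::real" "\<lambda>i. A i"] by simp
  qed
  also have "(\<Sum>j<n. if B j then 1 else 0 :: real) = real (card {j. j < n \<and> B j})"
  proof -
    have "{j. j < n \<and> B j} = {j\<in>{..<n}. B j}" by auto
    then show ?thesis using sum.inter_filter[OF finite_lessThan[of n], of "\<lambda>_. 1::real" "\<lambda>j. B j"] by simp
  qed
  finally show ?thesis .
qed

lemma card_lt_le: "card {i. i < n \<and> i < (a::nat)} \<le> a"
  by (rule order_trans[OF card_mono[of "{..<a}"]]) auto

lemma card_ge_le: "card {i. i < n \<and> n - b \<le> (i::nat)} \<le> b"
proof -
  have "{i. i < n \<and> n - b \<le> i} = {n-b..<n}" by auto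
  then show ?thesis by simp
qed

lemma growth:
  fixes p :: "nat \<Rightarrow> real" and D :: nat and c :: real
  assumes D: "D \<ge> 1" and pp: "\<forall>n. 0 < p n" and lim: "(\<lambda>n. real n powr (- c / real D) / p n) \<longlonglongrightarrow> 0"
  shows "filterlim (\<lambda>n. real n powr c * p n ^ D) at_top sequentially"
proof -
  let ?g = "\<lambda>n. real n powr (- c / real D) / p n"
  have "(\<lambda>n. ?g n ^ D) \<longlonglongrightarrow> 0 ^ D" by (intro tendsto_intros lim)
  moreover have "(0::real) ^ D = 0" using D by (simp add: power_0_left)
  ultimately have l0: "(\<lambda>n. ?g n ^ D) \<longlonglongrightarrow> 0" by simp
  have ev: "eventually (\<lambda>n. 0 < ?g n ^ D) sequentially"
    using eventually_gt_at_top[of 0] by eventually_elim (use pp in simp)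
  have li: "filterlim (\<lambda>n. inverse (?g n ^ D)) at_top sequentially"
    by (rule filterlim_inverse_at_top[OF l0 ev])
  have ee: "eventually (\<lambda>n. inverse (?g n ^ D) = real n powr c * p n ^ D) sequentially"
    using eventually_gt_at_top[of 0]
  proof eventually_elim
    case (elim n)
    have "?g n ^ D = (real n powr (- c / real D)) ^ D / p n ^ D" by (simp add: power_divide)
    also have "(real n powr (- c / real D)) ^ D = real n powr (real D * (- c / real D))"
      using elim by (simp add: powr_power)
    also have "real D * (- c / real D) = - c" using D by simp
    finally show ?case using elim pp by (simp add: powr_minus field_simps)
  qed
  show ?thesis using li filterlim_cong[OF refl refl ee] by blast
qed

lemma ceil_ratio:
  fixes M :: "nat \<Rightarrow> real"
  assumes c: "c \<ge> 0" and M: "filterlim M at_top sequentially"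
  shows "(\<lambda>n. real (nat \<lceil>c * M n\<rceil>) / M n) \<longlonglongrightarrow> c"
proof (rule tendsto_sandwich[of "\<lambda>n. c" _ _ "\<lambda>n. c + 1 / M n"])
  have evM: "eventually (\<lambda>n. M n > 0) sequentially" using M by (simp add: filterlim_at_top_dense)
  show "eventually (\<lambda>n. c \<le> real (nat \<lceil>c * M n\<rceil>) / M n) sequentially"
    using evM
  proof eventually_elim
    case (elim n)
    have "c * M n \<le> real (nat \<lceil>c * M n\<rceil>)" by linarith
    then show ?case using elim by (simp add: pos_le_divide_eq)
  qed
  show "eventually (\<lambda>n. real (nat \<lceil>c * M n\<rceil>) / M n \<le> c + 1 / M n) sequentially"
    using evM
  proof eventually_elim
    case (elim n)
    have "c * M n \<ge> 0" using c elim by simp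
    then have "real (nat \<lceil>c * M n\<rceil>) = of_int \<lceil>c * M n\<rceil>" by simp
    then have "real (nat \<lceil>c * M n\<rceil>) \<le> c * M n + 1" using of_int_ceiling_le_add_one[of "c * M n"] by linarith
    then have "real (nat \<lceil>c * M n\<rceil>) / M n \<le> (c * M n + 1) / M n"
      by (rule divide_right_mono) (use elim in simp)
    moreover have "(c * M n + 1) / M n = c + 1 / M n" using elim by (simp add: field_simps)
    ultimately show ?case by simp
  qed
  show "(\<lambda>n. c) \<longlonglongrightarrow> c" by simp
  have "(\<lambda>n. 1 / M n) \<longlonglongrightarrow> 0" using M by (intro tendsto_divide_0[of "\<lambda>_. 1"]) (auto simp: filterlim_at_top_imp_at_infinity)
  then show "(\<lambda>n. c + 1 / M n) \<longlonglongrightarrow> c" using tendsto_add[of "\<lambda>_. c" c sequentially] by fastforce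
qed

lemma floor_ratio:
  fixes N :: "nat \<Rightarrow> real"
  assumes c: "c \<ge> 0" and N: "(\<lambda>n. N n / real n) \<longlonglongrightarrow> 1"
  shows "(\<lambda>n. real (nat \<lfloor>c * N n\<rfloor>) / real n) \<longlonglongrightarrow> c"
proof (rule tendsto_sandwich[of "\<lambda>n. c * (N n / real n) - 1 / real n" _ _ "\<lambda>n. c * (N n / real n)"])
  show "eventually (\<lambda>n. c * (N n / real n) - 1 / real n \<le> real (nat \<lfloor>c * N n\<rfloor>) / real n) sequentially"
    using eventually_gt_at_top[of 0]
  proof eventually_elim
    case (elim n)
    have "c * N n - 1 \<le> real (nat \<lfloor>c * N n\<rfloor>)" by linarith
    then have "(c * N n - 1) / real n \<le> real (nat \<lfloor>c * N n\<rfloor>) / real n"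
      by (rule divide_right_mono) simp
    moreover have "c * (N n / real n) - 1 / real n = (c * N n - 1) / real n" by (simp add: diff_divide_distrib)
    ultimately show ?case by simp
  qed
  show "eventually (\<lambda>n. real (nat \<lfloor>c * N n\<rfloor>) / real n \<le> c * (N n / real n)) sequentially"
    using eventually_gt_at_top[of 0] N
  proof -
    have "eventually (\<lambda>n. N n / real n > 0) sequentially" using N by (rule order_tendstoD) simp
    then show ?thesis using eventually_gt_at_top[of 0]
    proof eventually_elim
      case (elim n)
      then have "N n > 0" by (simp add: zero_less_divide_iff)
      then have "real (nat \<lfloor>c * N n\<rfloor>) \<le> c * N n" using c by (simp add: floor_le_iff)
      then show ?case using elim by (simp add: divide_right_mono)
    qed
  qed
  have "(\<lambda>n. 1 / real n) \<longlonglongrightarrow> 0" by (rule lim_const_over_n)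
  then show "(\<lambda>n. c * (N n / real n) - 1 / real n) \<longlonglongrightarrow> c"
    using tendsto_diff[OF tendsto_mult[OF tendsto_const N]] by fastforce
  show "(\<lambda>n. c * (N n / real n)) \<longlonglongrightarrow> c" using tendsto_mult[OF tendsto_const N, of c] by simp
qed

lemma inv_floor:
  fixes N :: "nat \<Rightarrow> real"
  assumes c: "c \<ge> 0" and N: "filterlim N at_top sequentially"
  shows "(\<lambda>n. 1 / real (nat \<lfloor>c * N n\<rfloor>)) \<longlonglongrightarrow> 0"
proof (cases "c = 0")
  case True then show ?thesis by simp
next
  case False
  then have cp: "c > 0" using c by simp
  have "filterlim (\<lambda>n. c * N n) at_top sequentially"
    using filterlim_tendsto_pos_mult_at_top[OF tendsto_const cp N] .
  then have "filterlim (\<lambda>n. -1 + c * N n) at_top sequentially"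
    by (rule filterlim_tendsto_add_at_top[OF tendsto_const])
  moreover have "eventually (\<lambda>n. -1 + c * N n \<le> real (nat \<lfloor>c * N n\<rfloor>)) sequentially"
    by (rule always_eventually) linarith
  ultimately have "filterlim (\<lambda>n. real (nat \<lfloor>c * N n\<rfloor>)) at_top sequentially"
    by (rule filterlim_at_top_mono)
  then show ?thesis
    by (intro tendsto_divide_0[of "\<lambda>_. 1"]) (auto simp: filterlim_at_top_imp_at_infinity)
qed

lemma handshake: assumes H: "digraph V E" and reg: "regular V E D"
  shows "2 * card E = card V * D"
proof -
  have fV: "finite V" using H by (simp add: digraph_def)
  have o: "Eout E V = E" "Ein E V = E" using H unfolding Eout_def Ein_def digraph_def by auto
  have "card E + card E = (\<Sum>w\<in>V. deg E w)"
    using card_Eout[OF H fV] card_Ein[OF H fV] o by (simp add: deg_def sum.distrib)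
  also have "\<dots> = (\<Sum>w\<in>V. D)" using reg unfolding regular_def by simp
  finally show ?thesis by simp
qed

lemma clique_hom:
  fixes s n :: nat
  assumes H: "digraph V E" and Vne: "V \<noteq> {}" and p: "0 < p" "p \<le> 1" and sn: "s \<le> n"
  defines "Q \<equiv> (\<lambda>i j. if i = j then 0 else if i < s \<and> j < s then 1 else p)"
  shows "(p ^ card E * (real (n - s) ^ card V * (1 - real (card E) / real (n - s)))
          + real s ^ card V * (1 - real (card E) / real s)) / real n ^ card V \<le> hom_density V E n Q"
proof -
  let ?K = "{0::nat, 1}"
  define C where "C k w = (if k = 0 then {s..<n} else {..<s})" for k :: nat and w :: 'a
  define L where "L k = (if k = 0 then p ^ card E else 1)" for k :: nat
  have EV: "fst e \<in> V \<and> snd e \<in> V \<and> fst e \<noteq> snd e" if "e \<in> E" for e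
    using H that unfolding digraph_def by (cases e) auto
  have main: "(\<Sum>k\<in>?K. L k * ((\<Prod>w\<in>V. real (card (C k w))) * (1 - (\<Sum>e\<in>E - {}. 1 / real (card (C k (snd e)))))))
     \<le> (\<Sum>\<phi>\<in>PiE V (\<lambda>_. {..<n}). \<Prod>e\<in>E. Q (\<phi> (fst e)) (\<phi> (snd e)))"
  proof (rule hom_lower[OF H, where F = "\<lambda>_. {}"])
    show "finite ?K" by simp
    show "\<forall>i<n. \<forall>j<n. 0 \<le> Q i j" using p by (simp add: Q_def)
    show "C k w \<subseteq> {..<n}" if "k \<in> ?K" "w \<in> V" for k w using sn by (auto simp: C_def)
    show "\<exists>w\<in>V. C k w \<inter> C k' w = {}" if "k \<in> ?K" "k' \<in> ?K" "k \<noteq> k'" for k k'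
      using that Vne by (auto simp: C_def)
    show "0 \<le> L k" for k using p by (simp add: L_def)
    fix k \<phi> assume k: "k \<in> ?K" and phi: "\<phi> \<in> PiE V (C k)" and ne: "\<forall>e\<in>E - {}. \<phi> (fst e) \<noteq> \<phi> (snd e)"
    show "L k \<le> (\<Prod>e\<in>E. Q (\<phi> (fst e)) (\<phi> (snd e)))"
    proof (cases "k = 0")
      case True
      have "Q (\<phi> (fst e)) (\<phi> (snd e)) = p" if "e \<in> E" for e
      proof -
        have "\<phi> (fst e) \<in> {s..<n}" using phi EV[OF that] True by (auto simp: C_def PiE_def Pi_def)
        then show ?thesis using ne that by (auto simp: Q_def)
      qed
      then have "(\<Prod>e\<in>E. Q (\<phi> (fst e)) (\<phi> (snd e))) = (\<Prod>e\<in>E. p)" by (rule prod.cong[OF refl])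
      then show ?thesis using True by (simp add: L_def)
    next
      case False
      have "Q (\<phi> (fst e)) (\<phi> (snd e)) = 1" if "e \<in> E" for e
      proof -
        have "\<phi> (fst e) \<in> {..<s}" "\<phi> (snd e) \<in> {..<s}" using phi EV[OF that] False by (auto simp: C_def PiE_def Pi_def)
        then show ?thesis using ne that by (auto simp: Q_def)
      qed
      then have "(\<Prod>e\<in>E. Q (\<phi> (fst e)) (\<phi> (snd e))) = 1" by simp
      then show ?thesis using False by (simp add: L_def)
    qed
  qed
  have l: "(\<Sum>k\<in>?K. L k * ((\<Prod>w\<in>V. real (card (C k w))) * (1 - (\<Sum>e\<in>E - {}. 1 / real (card (C k (snd e)))))))
      = p ^ card E * (real (n - s) ^ card V * (1 - real (card E) / real (n - s)))
          + real s ^ card V * (1 - real (card E) / real s)"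
    by (simp add: C_def L_def)
  show ?thesis unfolding hom_density_def using main l
    by (simp add: divide_inverse mult.commute mult_left_mono)
qed

lemma clique_cost:
  fixes s n :: nat
  assumes p: "0 < p" "p < 1"
  shows "Ip_mat n p (\<lambda>i j. if i = j then 0 else if i < s \<and> j < s then 1 else p) \<le> ln (1/p) * real s ^ 2"
proof -
  have "Ip_mat n p (\<lambda>i j. if i = j then 0 else if i < s \<and> j < s then 1 else p)
      \<le> ln (1/p) * (\<Sum>i<n. \<Sum>j<n. if i < s \<and> j < s then 1 else 0)"
    by (rule Ip_mat_bound[OF p]) simp
  also have "(\<Sum>i<n. \<Sum>j<n. if i < s \<and> j < s then 1 else 0 :: real) = real (card {i. i < n \<and> i < s}) * real (card {j. j < n \<and> j < s})"
    by (rule count_prod)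
  also have "\<dots> \<le> real s * real s"
    using card_lt_le[of n s] by (intro mult_mono) auto
  finally show ?thesis using p by (simp add: power2_eq_square mult_left_mono)
qed

lemma choose_eta:
  fixes \<delta> a \<epsilon> :: real
  assumes "\<delta> > 0" "\<epsilon> > 0"
  shows "\<exists>\<eta>>0. (\<delta> + \<eta>) powr a < \<delta> powr a + \<epsilon>"
proof -
  have "((\<lambda>\<eta>. (\<delta> + \<eta>) powr a) \<longlongrightarrow> (\<delta> + 0) powr a) (at 0)"
    using assms by (intro tendsto_intros) auto
  then have "((\<lambda>\<eta>. (\<delta> + \<eta>) powr a) \<longlongrightarrow> \<delta> powr a) (at 0)" by simp
  then have "((\<lambda>\<eta>. (\<delta> + \<eta>) powr a) \<longlongrightarrow> \<delta> powr a) (at_right 0)"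
    by (rule filterlim_mono[OF _ order_refl at_le[OF subset_UNIV]])
  then have "eventually (\<lambda>\<eta>. (\<delta> + \<eta>) powr a < \<delta> powr a + \<epsilon>) (at_right 0)"
    by (rule order_tendstoD) (use assms in simp)
  then obtain b where b: "b > 0" "\<forall>y>0. y < b \<longrightarrow> (\<delta> + y) powr a < \<delta> powr a + \<epsilon>"
    unfolding eventually_at_right_field by auto
  then show ?thesis by (intro exI[of _ "b/2"]) auto
qed

lemma part3:
  fixes p :: "nat \<Rightarrow> real"
  assumes H: "digraph V E" and Ene: "E \<noteq> {}" and dp: "\<delta> > 0"
    and reg: "regular V E (maxdeg V E)"
    and pp: "\<forall>n. 0 < p n \<and> p n < 1"
    and lim: "(\<lambda>n. real n powr (- 2 / real (maxdeg V E)) / p n) \<longlonglongrightarrow> 0"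
    and p0: "p \<longlonglongrightarrow> 0" and ep: "\<epsilon> > 0"
  shows "eventually (\<lambda>n. rate V E \<delta> n (p n) \<le> \<delta> powr (2 / real (card V)) + \<epsilon>) sequentially"
proof -
  define D where "D = maxdeg V E"
  define v where "v = card V"
  define e where "e = card E"
  have D1: "D \<ge> 1" using maxdeg_pos[OF H Ene] by (simp add: D_def)
  have Vne: "V \<noteq> {}" using H Ene unfolding digraph_def by auto
  have fV: "finite V" using H by (simp add: digraph_def)
  have v1: "v \<ge> 1" using Vne fV by (simp add: v_def Suc_le_eq card_gt_0_iff)
  have hs: "2 * e = v * D" using handshake[OF H reg] by (simp add: e_def v_def D_def)
  obtain \<eta> where eta: "\<eta> > 0" "(\<delta> + \<eta>) powr (2 / real v) < \<delta> powr (2 / real v) + \<epsilon>"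
    using choose_eta[OF dp ep] by blast
  define c where "c = (\<delta> + \<eta>) powr (1 / real v)"
  have cp: "c > 0" using dp eta by (simp add: c_def)
  have cv: "c ^ v = \<delta> + \<eta>"
  proof -
    have "c ^ v = (\<delta> + \<eta>) powr (real v * (1 / real v))" unfolding c_def
      using dp eta by (subst powr_power) auto
    also have "\<dots> = \<delta> + \<eta>" using v1 dp eta by simp
    finally show ?thesis .
  qed
  have c2: "c ^ 2 = (\<delta> + \<eta>) powr (2 / real v)"
  proof -
    have "c ^ 2 = (\<delta> + \<eta>) powr (real 2 * (1 / real v))" unfolding c_def
      using dp eta by (subst powr_power) auto
    then show ?thesis by simp
  qed
  define P where "P n = p n ^ D" for n
  define M where "M n = real n * sqrt (P n)" for n
  define s where "s n = nat \<lceil>c * M n\<rceil>" for n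
  define N0 where "N0 n = n - s n" for n
  have Ppos: "P n > 0" for n using pp by (simp add: P_def)
  have gr: "filterlim (\<lambda>n. real n powr 2 * p n ^ D) at_top sequentially"
    using growth[OF D1, of p 2] pp lim by (simp add: D_def)
  have evM2: "eventually (\<lambda>n. real n powr 2 * p n ^ D = (M n)^2) sequentially"
    using eventually_gt_at_top[of 0]
    by eventually_elim (use Ppos in \<open>simp add: M_def P_def power_mult_distrib less_imp_le\<close>)
  have M2: "filterlim (\<lambda>n. (M n)^2) at_top sequentially"
    using filterlim_cong[OF refl refl evM2] gr by simp
  have Mnn: "M n \<ge> 0" for n using Ppos by (simp add: M_def less_imp_le)
  have Mlim: "filterlim M at_top sequentially"
  proof -
    have "filterlim (\<lambda>n. sqrt ((M n)^2)) at_top sequentially"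
      by (rule filterlim_compose[OF sqrt_at_top M2])
    then show ?thesis using Mnn by simp
  qed
  have sM: "(\<lambda>n. real (s n) / M n) \<longlonglongrightarrow> c"
    unfolding s_def by (rule ceil_ratio[OF less_imp_le[OF cp] Mlim])
  have slim: "filterlim (\<lambda>n. real (s n)) at_top sequentially"
  proof (rule filterlim_at_top_mono)
    show "filterlim (\<lambda>n. c * M n) at_top sequentially"
      by (rule filterlim_tendsto_pos_mult_at_top[OF tendsto_const cp Mlim])
    show "eventually (\<lambda>n. c * M n \<le> real (s n)) sequentially"
      by (rule always_eventually) (simp add: s_def, linarith)
  qed
  have Plim: "P \<longlonglongrightarrow> 0"
  proof -
    have "(\<lambda>n. p n ^ D) \<longlonglongrightarrow> 0 ^ D" by (intro tendsto_intros p0)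
    then show ?thesis using D1 by (simp add: P_def[abs_def] power_0_left)
  qed
  have rlim: "(\<lambda>n. sqrt (P n)) \<longlonglongrightarrow> 0" using tendsto_real_sqrt[OF Plim] by simp
  have sn: "(\<lambda>n. real (s n) / real n) \<longlonglongrightarrow> 0"
  proof -
    have "(\<lambda>n. real (s n) / M n * sqrt (P n)) \<longlonglongrightarrow> 0" using tendsto_mult[OF sM rlim] by simp
    moreover have "eventually (\<lambda>n. real (s n) / M n * sqrt (P n) = real (s n) / real n) sequentially"
      using eventually_gt_at_top[of 0]
    proof eventually_elim
      case (elim n)
      have "sqrt (P n) \<noteq> 0" "real n \<noteq> 0" using Ppos[of n] elim by auto
      then show ?case by (simp add: M_def)
    qed
    ultimately show ?thesis by (rule Lim_transform_eventually)
  qed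
  have ev_sn: "eventually (\<lambda>n. real (s n) / real n < 1/2) sequentially"
    by (rule order_tendstoD[OF sn]) simp
  have ev_le: "eventually (\<lambda>n. s n \<le> n \<and> n > 0) sequentially"
    using ev_sn eventually_gt_at_top[of 0]
  proof eventually_elim
    case (elim n)
    then have "real (s n) < real n / 2" by (simp add: divide_less_eq)
    then show ?case using elim by simp
  qed
  have N0n: "(\<lambda>n. real (N0 n) / real n) \<longlonglongrightarrow> 1"
  proof -
    have "(\<lambda>n. 1 - real (s n) / real n) \<longlonglongrightarrow> 1" using tendsto_diff[OF tendsto_const sn, of 1] by simp
    moreover have "eventually (\<lambda>n. 1 - real (s n) / real n = real (N0 n) / real n) sequentially"
      using ev_le by eventually_elim (simp add: N0_def of_nat_diff field_simps)
    ultimately show ?thesis by (rule Lim_transform_eventually)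
  qed
  have N0lim: "filterlim (\<lambda>n. real (N0 n)) at_top sequentially"
  proof -
    have A: "filterlim (\<lambda>n. real (N0 n) / real n * real n) at_top sequentially"
      by (rule filterlim_tendsto_pos_mult_at_top[OF N0n]) (simp_all add: filterlim_real_sequentially)
    have B: "eventually (\<lambda>n. real (N0 n) / real n * real n = real (N0 n)) sequentially"
      using eventually_gt_at_top[of 0] by eventually_elim simp
    show ?thesis using filterlim_cong[OF refl refl B] A by simp
  qed
  define LB where "LB n = (real (N0 n) / real n) ^ v * (1 - real e / real (N0 n))
        + (real (s n) / M n) ^ v * (1 - real e / real (s n))" for n
  have LBlim: "LB \<longlonglongrightarrow> 1 ^ v * (1 - 0) + c ^ v * (1 - 0)"
    unfolding LB_def[abs_def]
    by (intro tendsto_intros N0n sM tendsto_divide_0[OF tendsto_const]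
        filterlim_at_top_imp_at_infinity N0lim slim)
  then have "LB \<longlonglongrightarrow> 1 + (\<delta> + \<eta>)" using cv by simp
  then have ev_LB: "eventually (\<lambda>n. LB n > 1 + \<delta>) sequentially"
    by (rule order_tendstoD) (use eta in simp)
  have "(\<lambda>n. (real (s n) / M n) ^ 2) \<longlonglongrightarrow> c ^ 2" by (intro tendsto_intros sM)
  then have ev_cost: "eventually (\<lambda>n. (real (s n) / M n) ^ 2 < \<delta> powr (2 / real v) + \<epsilon>) sequentially"
    by (rule order_tendstoD) (use eta c2 in simp)
  show ?thesis
    using ev_LB ev_cost ev_le
  proof eventually_elim
    case (elim n)
    define q where "q = p n"
    have q: "0 < q" "q < 1" using pp by (simp_all add: q_def)
    define Q where "Q = (\<lambda>i j. if i = j then 0 else if i < s n \<and> j < s n then 1 else q)"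
    have QQ: "Q \<in> Qmats n" using q by (auto simp: Q_def Qmats_def)
    have rv: "sqrt (P n) ^ v = q ^ e"
    proof -
      have "sqrt (P n) ^ v = sqrt (P n ^ v)" by (simp add: real_sqrt_power)
      also have "P n ^ v = (q ^ e) ^ 2" using hs by (simp add: P_def q_def power_mult[symmetric] mult.commute)
      also have "sqrt ((q ^ e) ^ 2) = q ^ e" using q by simp
      finally show ?thesis .
    qed
    have hd: "(q ^ e * (real (n - s n) ^ v * (1 - real e / real (n - s n)))
          + real (s n) ^ v * (1 - real e / real (s n))) / real n ^ v \<le> hom_density V E n Q"
      using clique_hom[OF H Vne, of q "s n" n] q elim by (simp add: Q_def e_def v_def)
    have "(q ^ e * (real (n - s n) ^ v * (1 - real e / real (n - s n)))
          + real (s n) ^ v * (1 - real e / real (s n))) / real n ^ v = q ^ e * LB n"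
    proof -
      have Mn: "M n = real n * sqrt (P n)" by (simp add: M_def)
      have qe: "q ^ e > 0" using q by simp
      have B: "q ^ e * (real (s n) / M n) ^ v = real (s n) ^ v / real n ^ v"
        unfolding Mn power_divide power_mult_distrib rv using qe elim q by (simp add: field_simps)
      have A: "q ^ e * (real (n - s n) ^ v * (1 - real e / real (n - s n))) / real n ^ v
          = q ^ e * ((real (N0 n) / real n) ^ v * (1 - real e / real (N0 n)))"
        by (simp add: N0_def power_divide)
      have "(q ^ e * (real (n - s n) ^ v * (1 - real e / real (n - s n)))
          + real (s n) ^ v * (1 - real e / real (s n))) / real n ^ v
          = q ^ e * (real (n - s n) ^ v * (1 - real e / real (n - s n))) / real n ^ v
           + real (s n) ^ v / real n ^ v * (1 - real e / real (s n))"
        by (simp add: add_divide_distrib)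
      also have "\<dots> = q ^ e * ((real (N0 n) / real n) ^ v * (1 - real e / real (N0 n)))
           + q ^ e * (real (s n) / M n) ^ v * (1 - real e / real (s n))"
        unfolding A B ..
      also have "\<dots> = q ^ e * LB n" unfolding LB_def by (simp add: algebra_simps)
      finally show ?thesis .
    qed
    then have "q ^ e * LB n \<le> hom_density V E n Q" using hd by simp
    moreover have "(1 + \<delta>) * q ^ e \<le> q ^ e * LB n" using elim q by (simp add: mult.commute less_imp_le)
    ultimately have hd2: "(1 + \<delta>) * q ^ card E \<le> hom_density V E n Q" by (simp add: e_def)
    have "Phi V E n q \<delta> \<le> Ip_mat n q Q" by (rule Phi_le[OF q QQ hd2])
    also have "\<dots> \<le> ln (1/q) * real (s n) ^ 2" unfolding Q_def by (rule clique_cost[OF q])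
    finally have Phi: "Phi V E n q \<delta> \<le> ln (1/q) * real (s n) ^ 2" .
    have lq: "ln (1/q) > 0" using q by simp
    have den: "real n ^ 2 * q ^ D * ln (1/q) > 0" using q elim lq by simp
    have "rate V E \<delta> n q = Phi V E n q \<delta> / (real n ^ 2 * q ^ D * ln (1/q))"
      by (simp add: rate_def D_def)
    also have "\<dots> \<le> ln (1/q) * real (s n) ^ 2 / (real n ^ 2 * q ^ D * ln (1/q))"
      by (rule divide_right_mono[OF Phi]) (use den in simp)
    also have "\<dots> = (real (s n) / M n) ^ 2"
    proof -
      have "(M n)^2 = real n ^ 2 * q ^ D" using Ppos by (simp add: M_def P_def q_def power_mult_distrib less_imp_le)
      then show ?thesis using lq by (simp add: power_divide)
    qed
    finally show ?case using elim by (simp add: q_def v_def)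
  qed
qed

definition hubC :: "'v set \<Rightarrow> ('v \<times> 'v) set \<Rightarrow> nat \<Rightarrow> nat \<Rightarrow> nat \<Rightarrow> nat \<Rightarrow> nat \<Rightarrow> nat \<Rightarrow> 'v set \<Rightarrow> 'v \<Rightarrow> nat set" where
  "hubC V E n a1 a2 b1 b2 bm S w =
    (if w \<in> S then (if \<not> (\<exists>u. (u, w) \<in> E) then {..<a1} else if \<not> (\<exists>u. (w, u) \<in> E) then {..<a2} else {..<min a1 a2})
     else if w \<in> Nout V E S \<and> w \<in> Nin V E S then {n-bm..<n}
     else if w \<in> Nout V E S then {n-b1..<n}
     else if w \<in> Nin V E S then {n-b2..<n}
     else {max a1 a2..<n})"

definition hubQ :: "nat \<Rightarrow> nat \<Rightarrow> nat \<Rightarrow> nat \<Rightarrow> nat \<Rightarrow> real \<Rightarrow> nat \<Rightarrow> nat \<Rightarrow> real" where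
  "hubQ n a1 a2 b1 b2 q i j = (if i = j then 0 else if (i < a1 \<and> n - b1 \<le> j) \<or> (n - b2 \<le> i \<and> j < a2) then 1 else q)"

lemma prod_if_const:
  assumes "finite A"
  shows "(\<Prod>e\<in>A. if e \<in> F then 1 else q) = (q::real) ^ card (A - F)"
proof -
  have "(\<Prod>e\<in>A. if e \<in> F then 1 else q) = (\<Prod>e\<in>A - F. q)"
    using assms by (induction A rule: finite_induct) (auto simp: insert_Diff_if)
  then show ?thesis by simp
qed

lemma disj_lem: assumes "A \<subseteq> {..<h}" "B \<subseteq> {h..<(n::nat)}" shows "A \<inter> B = {}"
proof (rule equals0I)
  fix x assume "x \<in> A \<inter> B"
  then have "x < h" "h \<le> x" using assms by auto
  then show False by simp
qed

lemma hub_hom: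
  fixes a1 a2 b1 b2 bm n :: nat
  assumes H: "digraph V E" and Ene: "E \<noteq> {}" and q: "0 < q" "q \<le> 1"
    and hb1: "max a1 a2 + b1 \<le> n" and hb2: "max a1 a2 + b2 \<le> n" and bm: "bm \<le> b1" "bm \<le> b2"
  shows "(\<Sum>S\<in>indep_sets V E. q ^ (card E - maxdeg V E * card S) *
      ((\<Prod>w\<in>V. real (card (hubC V E n a1 a2 b1 b2 bm S w))) *
       (1 - (\<Sum>e\<in>E - (Eout E S \<union> Ein E S). 1 / real (card (hubC V E n a1 a2 b1 b2 bm S (snd e)))))))
     \<le> (\<Sum>\<phi>\<in>PiE V (\<lambda>_. {..<n}). \<Prod>e\<in>E. hubQ n a1 a2 b1 b2 q (\<phi> (fst e)) (\<phi> (snd e)))"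
proof (rule hom_lower[OF H indep_sets_fin[OF H]])
  let ?C = "hubC V E n a1 a2 b1 b2 bm"
  let ?Q = "hubQ n a1 a2 b1 b2 q"
  let ?h = "max a1 a2"
  have EV: "fst e \<in> V \<and> snd e \<in> V \<and> fst e \<noteq> snd e" if "e \<in> E" for e
    using H that unfolding digraph_def by (cases e) auto
  show "\<forall>i<n. \<forall>j<n. 0 \<le> ?Q i j" using q by (simp add: hubQ_def)
  show "?C S w \<subseteq> {..<n}" if "S \<in> indep_sets V E" "w \<in> V" for S w
    using hb1 hb2 by (auto simp: hubC_def)
  have lowS: "?C S w \<subseteq> {..<?h}" if "w \<in> S" for S w using that by (auto simp: hubC_def)
  have highS: "?C S w \<subseteq> {?h..<n}" if "w \<notin> S" for S w using that hb1 hb2 bm by (auto simp: hubC_def)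
  show "\<exists>w\<in>V. ?C S w \<inter> ?C S' w = {}" if SS: "S \<in> indep_sets V E" "S' \<in> indep_sets V E" "S \<noteq> S'" for S S'
  proof -
    have sub: "S \<subseteq> V" "S' \<subseteq> V" using SS indep_sub by blast+
    have "\<exists>w. (w \<in> S) \<noteq> (w \<in> S')" using SS(3) by (meson subsetI subset_antisym)
    then obtain w where w: "(w \<in> S) \<noteq> (w \<in> S')" by blast
    then have wV: "w \<in> V" using sub by blast
    show ?thesis
    proof (cases "w \<in> S")
      case True
      then have "?C S w \<subseteq> {..<?h}" "?C S' w \<subseteq> {?h..<n}" using w lowS highS by auto
      then have "?C S w \<inter> ?C S' w = {}" by (rule disj_lem)
      then show ?thesis using wV by blast
    next
      case False
      then have "?C S' w \<subseteq> {..<?h}" "?C S w \<subseteq> {?h..<n}" using w lowS highS by auto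
      then have "?C S' w \<inter> ?C S w = {}" by (rule disj_lem)
      then have "?C S w \<inter> ?C S' w = {}" by (simp add: Int_commute)
      then show ?thesis using wV by blast
    qed
  qed
  show "0 \<le> q ^ (card E - maxdeg V E * card S)" for S using q by simp
  fix S \<phi> assume S: "S \<in> indep_sets V E" and phi: "\<phi> \<in> PiE V (?C S)"
    and ne: "\<forall>e\<in>E - (Eout E S \<union> Ein E S). \<phi> (fst e) \<noteq> \<phi> (snd e)"
  let ?F = "Eout E S \<union> Ein E S"
  have phiC: "\<phi> w \<in> ?C S w" if "w \<in> V" for w using phi that by (auto simp: PiE_def Pi_def)
  have fE: "finite E" by (rule digraph_finE[OF H])
  have FE: "?F \<subseteq> E" by (auto simp: Eout_def Ein_def)
  have ge: "(if e \<in> ?F then 1 else q) \<le> ?Q (\<phi> (fst e)) (\<phi> (snd e))" if e: "e \<in> E" for e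
  proof (cases "e \<in> ?F")
    case False
    then show ?thesis using ne e q by (auto simp: hubQ_def)
  next
    case True
    obtain u w where uw: "e = (u, w)" by force
    have uwE: "(u, w) \<in> E" and uV: "u \<in> V" and wV: "w \<in> V" using e EV[OF e] uw by auto
    show ?thesis
    proof (cases "e \<in> Eout E S")
      case True
      then have uS: "u \<in> S" using uw by (simp add: Eout_def)
      have wS: "w \<notin> S" using indep_no_edge[OF S uS] uwE by blast
      have wN: "w \<in> Nout V E S" using wS wV uS uwE by (auto simp: Nout_def)
      have "?C S u \<subseteq> {..<a1}" using uS uwE by (auto simp: hubC_def)
      then have pu: "\<phi> u < a1" using phiC[OF uV] by auto
      have "?C S w \<subseteq> {n-b1..<n}" using wS wN bm by (auto simp: hubC_def)
      then have pw: "n - b1 \<le> \<phi> w" using phiC[OF wV] by auto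
      have "\<phi> u \<noteq> \<phi> w" using pu pw hb1 by linarith
      then show ?thesis using pu pw uw q by (simp add: hubQ_def)
    next
      case False
      then have "e \<in> Ein E S" using True by simp
      then have uS: "w \<in> S" using uw by (simp add: Ein_def)
      have wS: "u \<notin> S" using indep_no_edge[OF S _ uS] uwE by blast
      have wN: "u \<in> Nin V E S" using wS uV uS uwE by (auto simp: Nin_def)
      have "?C S w \<subseteq> {..<a2}" using uS uwE by (auto simp: hubC_def)
      then have pw: "\<phi> w < a2" using phiC[OF wV] by auto
      have "?C S u \<subseteq> {n-b2..<n}" using wS wN bm by (auto simp: hubC_def)
      then have pu: "n - b2 \<le> \<phi> u" using phiC[OF uV] by auto
      have "\<phi> u \<noteq> \<phi> w" using pu pw hb2 by linarith
      then show ?thesis using pu pw uw q by (simp add: hubQ_def)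
    qed
  qed
  have "q ^ (card E - maxdeg V E * card S) = q ^ card (E - ?F)"
    using card_ES[OF H S] card_Diff_subset[OF finite_subset[OF FE fE] FE] by simp
  also have "\<dots> = (\<Prod>e\<in>E. if e \<in> ?F then 1 else q)" by (rule prod_if_const[OF fE, symmetric])
  also have "\<dots> \<le> (\<Prod>e\<in>E. ?Q (\<phi> (fst e)) (\<phi> (snd e)))"
    by (rule prod_mono) (use ge q in auto)
  finally show "q ^ (card E - maxdeg V E * card S) \<le> (\<Prod>e\<in>E. ?Q (\<phi> (fst e)) (\<phi> (snd e)))" .
qed

lemma hub_cost:
  fixes a1 a2 b1 b2 n :: nat
  assumes q: "0 < q" "q < 1"
  shows "Ip_mat n q (hubQ n a1 a2 b1 b2 q) \<le> ln (1/q) * (real a1 * real b1 + real b2 * real a2)"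
proof -
  let ?P = "\<lambda>i j. (i < a1 \<and> n - b1 \<le> j) \<or> (n - b2 \<le> i \<and> j < a2)"
  have "Ip_mat n q (hubQ n a1 a2 b1 b2 q) \<le> ln (1/q) * (\<Sum>i<n. \<Sum>j<n. if ?P i j then 1 else 0)"
    by (rule Ip_mat_bound[OF q]) (simp add: hubQ_def)
  also have "(\<Sum>i<n. \<Sum>j<n. if ?P i j then 1 else 0 :: real)
      \<le> (\<Sum>i<n. \<Sum>j<n. (if i < a1 \<and> n - b1 \<le> j then 1 else 0) + (if n - b2 \<le> i \<and> j < a2 then 1 else 0))"
    by (intro sum_mono) auto
  also have "\<dots> = (\<Sum>i<n. \<Sum>j<n. if i < a1 \<and> n - b1 \<le> j then 1 else 0) + (\<Sum>i<n. \<Sum>j<n. if n - b2 \<le> i \<and> j < a2 then 1 else 0)"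
    by (simp add: sum.distrib)
  also have "\<dots> \<le> real a1 * real b1 + real b2 * real a2"
    unfolding count_prod
    using card_lt_le[of n a1] card_ge_le[of n b1] card_lt_le[of n a2] card_ge_le[of n b2]
    by (intro add_mono mult_mono) auto
  finally show ?thesis using q by (simp add: mult_left_mono)
qed

definition limv :: "'v set \<Rightarrow> ('v \<times> 'v) set \<Rightarrow> real \<Rightarrow> real \<Rightarrow> real \<Rightarrow> real \<Rightarrow> 'v set \<Rightarrow> 'v \<Rightarrow> real" where
  "limv V E x1 x2 y1 y2 S w =
    (if w \<in> S then (if \<not> (\<exists>u. (u, w) \<in> E) then x1 else if \<not> (\<exists>u. (w, u) \<in> E) then x2 else min x1 x2)
     else (if w \<in> Nout V E S then y1 else 1) * (if w \<in> Nin V E S then y2 else 1))"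

lemma prod_if_one:
  assumes "finite A"
  shows "(\<Prod>w\<in>A. if w \<in> F then y else 1) = (y::real) ^ card (A \<inter> F)"
proof -
  have "(\<Prod>w\<in>A. if w \<in> F then y else 1) = (\<Prod>w\<in>A. if w \<in> -F then 1 else y)"
    by (intro prod.cong refl) auto
  also have "\<dots> = y ^ card (A - (-F))" by (rule prod_if_const[OF assms])
  also have "A - (-F) = A \<inter> F" by auto
  finally show ?thesis .
qed

lemma prod_limv:
  assumes H: "digraph V E" and Ene: "E \<noteq> {}" and S: "S \<in> indep_sets V E"
  shows "(\<Prod>w\<in>V. limv V E x1 x2 y1 y2 S w) = tm V E S x1 x2 y1 y2"
proof -
  have fV: "finite V" using H by (simp add: digraph_def)
  have SV: "S \<subseteq> V" using indep_sub[OF S] .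
  have fS: "finite S" using indep_fin[OF H S] .
  let ?f = "limv V E x1 x2 y1 y2 S"
  have nz: "(\<exists>u. (u, s) \<in> E) \<or> (\<exists>u. (s, u) \<in> E)" if "s \<in> S" for s
  proof (rule ccontr)
    assume "\<not> ?thesis"
    then have "indeg E s = 0" "outdeg E s = 0" by (auto simp: indeg_def outdeg_def)
    then have "deg E s = 0" by (simp add: deg_def)
    then show False using indep_deg[OF S that] maxdeg_pos[OF H Ene] by simp
  qed
  let ?A = "{v\<in>S. \<not> (\<exists>u. (u, v) \<in> E)}"
  let ?B = "{v\<in>S. \<not> (\<exists>u. (v, u) \<in> E)}"
  let ?C = "{v\<in>S. (\<exists>u. (u, v) \<in> E) \<and> (\<exists>u. (v, u) \<in> E)}"
  have e1: "S = (?A \<union> ?B) \<union> ?C" by auto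
  have d1: "?A \<inter> ?B = {}" using nz by auto
  have d2: "(?A \<union> ?B) \<inter> ?C = {}" by auto
  have "prod ?f S = prod ?f (?A \<union> ?B) * prod ?f ?C"
    by (subst e1, rule prod.union_disjoint) (use fS d2 in auto)
  also have "prod ?f (?A \<union> ?B) = prod ?f ?A * prod ?f ?B"
    by (rule prod.union_disjoint) (use fS d1 in auto)
  also have "prod ?f ?A = x1 ^ card ?A" by (simp add: limv_def)
  also have "prod ?f ?B = x2 ^ card ?B"
  proof -
    have "prod ?f ?B = prod (\<lambda>_. x2) ?B" using nz by (intro prod.cong refl) (auto simp: limv_def)
    then show ?thesis by simp
  qed
  also have "prod ?f ?C = (min x1 x2) ^ card ?C"
  proof -
    have "prod ?f ?C = prod (\<lambda>_. min x1 x2) ?C" by (intro prod.cong refl) (auto simp: limv_def)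
    then show ?thesis by simp
  qed
  finally have PS: "prod ?f S = x1 ^ vplus E S * x2 ^ vminus E S * (min x1 x2) ^ vpm E S"
    by (simp add: vplus_def vminus_def vpm_def)
  have "prod ?f (V - S) = (\<Prod>w\<in>V - S. (if w \<in> Nout V E S then y1 else 1) * (if w \<in> Nin V E S then y2 else 1))"
    by (intro prod.cong refl) (auto simp: limv_def)
  also have "\<dots> = (\<Prod>w\<in>V - S. if w \<in> Nout V E S then y1 else 1) * (\<Prod>w\<in>V - S. if w \<in> Nin V E S then y2 else 1)"
    by (rule prod.distrib)
  also have "\<dots> = y1 ^ card ((V - S) \<inter> Nout V E S) * y2 ^ card ((V - S) \<inter> Nin V E S)"
    using fV by (simp add: prod_if_one)
  also have "(V - S) \<inter> Nout V E S = Nout V E S" by (auto simp: Nout_def)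
  also have "(V - S) \<inter> Nin V E S = Nin V E S" by (auto simp: Nin_def)
  finally have PV: "prod ?f (V - S) = y1 ^ card (Nout V E S) * y2 ^ card (Nin V E S)" .
  have "prod ?f V = prod ?f (V - S) * prod ?f S" by (rule prod.subset_diff[OF SV fV])
  then show ?thesis using PS PV by (simp add: tm_def mult_ac)
qed

lemma min_div: "T > 0 \<Longrightarrow> real (min a b) / T = min (real a / T) (real b / T)"
  by (cases "a \<le> b") (auto simp: min_def divide_right_mono divide_le_cancel)

lemma max_div: "T > 0 \<Longrightarrow> real (max a b) / T = max (real a / T) (real b / T)"
  by (cases "a \<le> b") (auto simp: max_def divide_right_mono divide_le_cancel)

lemma tendsto_if_const:
  "(f \<longlonglongrightarrow> a) \<Longrightarrow> (g \<longlonglongrightarrow> b) \<Longrightarrow> ((\<lambda>n. if c then f n else g n) \<longlonglongrightarrow> (if c then a else b))"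
  by (cases c) auto

lemma prod_den:
  assumes "finite V" "S \<subseteq> V"
  shows "(\<Prod>w\<in>V. if w \<in> S then x * y else x) = (x::real) ^ card V * y ^ card S"
proof -
  have "(\<Prod>w\<in>V. if w \<in> S then x * y else x) = (\<Prod>w\<in>V. x * (if w \<in> S then y else 1))"
    by (intro prod.cong refl) auto
  also have "\<dots> = x ^ card V * (\<Prod>w\<in>V. if w \<in> S then y else 1)" by (simp add: prod.distrib)
  also have "(\<Prod>w\<in>V. if w \<in> S then y else 1) = y ^ card (V \<inter> S)" by (rule prod_if_one[OF assms(1)])
  also have "V \<inter> S = S" using assms(2) by auto
  finally show ?thesis .
qed


lemma hub_rate:
  fixes p :: "nat \<Rightarrow> real"
  assumes H: "digraph V E" and Ene: "E \<noteq> {}" and dp: "\<delta> > 0"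
    and pp: "\<forall>n. 0 < p n \<and> p n < 1"
    and Tlim: "filterlim (\<lambda>n. real n * p n ^ maxdeg V E) at_top sequentially"
    and p0: "p \<longlonglongrightarrow> 0"
    and x: "0 \<le> x1" "0 \<le> x2" and y: "0 \<le> y1" "y1 \<le> 1" "0 \<le> y2" "y2 \<le> 1" "max y1 y2 = 1"
    and fgt: "fH V E x1 x2 y1 y2 > 1 + \<delta>" and ep: "\<epsilon> > 0"
  shows "eventually (\<lambda>n. rate V E \<delta> n (p n) \<le> x1 * y1 + x2 * y2 + \<epsilon>) sequentially"
proof -
  define D where "D = maxdeg V E"
  have D1: "D \<ge> 1" using maxdeg_pos[OF H Ene] by (simp add: D_def)
  have fV: "finite V" using H by (simp add: digraph_def)
  have fI: "finite (indep_sets V E)" by (rule indep_sets_fin[OF H])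
  define P where "P n = p n ^ D" for n
  define T where "T n = real n * P n" for n
  have Ppos: "P n > 0" for n using pp by (simp add: P_def)
  have Tl: "filterlim T at_top sequentially" using Tlim by (simp add: T_def[abs_def] P_def D_def)
  have evT: "eventually (\<lambda>n. T n > 0) sequentially" using Tl by (simp add: filterlim_at_top_dense)
  define a1 where "a1 n = nat \<lceil>x1 * T n\<rceil>" for n
  define a2 where "a2 n = nat \<lceil>x2 * T n\<rceil>" for n
  define h where "h n = max (a1 n) (a2 n)" for n
  define N0 where "N0 n = real (n - h n)" for n
  define b1 where "b1 n = nat \<lfloor>y1 * N0 n\<rfloor>" for n
  define b2 where "b2 n = nat \<lfloor>y2 * N0 n\<rfloor>" for n
  define bm where "bm n = nat \<lfloor>min y1 y2 * N0 n\<rfloor>" for n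
  have LA1: "(\<lambda>n. real (a1 n) / T n) \<longlonglongrightarrow> x1" unfolding a1_def by (rule ceil_ratio[OF x(1) Tl])
  have LA2: "(\<lambda>n. real (a2 n) / T n) \<longlonglongrightarrow> x2" unfolding a2_def by (rule ceil_ratio[OF x(2) Tl])
  have LAm: "(\<lambda>n. real (min (a1 n) (a2 n)) / T n) \<longlonglongrightarrow> min x1 x2"
  proof -
    have "(\<lambda>n. min (real (a1 n) / T n) (real (a2 n) / T n)) \<longlonglongrightarrow> min x1 x2"
      by (rule tendsto_min[OF LA1 LA2])
    moreover have "eventually (\<lambda>n. min (real (a1 n) / T n) (real (a2 n) / T n) = real (min (a1 n) (a2 n)) / T n) sequentially"
      using evT by eventually_elim (simp add: min_div)
    ultimately show ?thesis by (rule Lim_transform_eventually)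
  qed
  have Plim: "P \<longlonglongrightarrow> 0"
  proof -
    have "(\<lambda>n. p n ^ D) \<longlonglongrightarrow> 0 ^ D" by (intro tendsto_intros p0)
    then show ?thesis using D1 by (simp add: P_def[abs_def] power_0_left)
  qed
  have Lh: "(\<lambda>n. real (h n) / real n) \<longlonglongrightarrow> 0"
  proof -
    have "(\<lambda>n. max (real (a1 n) / T n) (real (a2 n) / T n) * P n) \<longlonglongrightarrow> max x1 x2 * 0"
      by (intro tendsto_mult tendsto_max LA1 LA2 Plim)
    moreover have "eventually (\<lambda>n. max (real (a1 n) / T n) (real (a2 n) / T n) * P n = real (h n) / real n) sequentially"
      using evT eventually_gt_at_top[of 0]
    proof eventually_elim
      case (elim n)
      have "max (real (a1 n) / T n) (real (a2 n) / T n) = real (h n) / T n"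
        using elim by (simp add: max_div h_def)
      moreover have "P n \<noteq> 0" "real n \<noteq> 0" using Ppos[of n] elim by auto
      ultimately show ?case by (simp add: T_def)
    qed
    ultimately show ?thesis by (simp add: Lim_transform_eventually)
  qed
  have ev_h2: "eventually (\<lambda>n. real (h n) / real n < 1/2) sequentially"
    by (rule order_tendstoD(2)[OF Lh]) simp
  have ev_h: "eventually (\<lambda>n. h n \<le> n \<and> n > 0) sequentially"
    using ev_h2 eventually_gt_at_top[of 0]
  proof eventually_elim
    case (elim n)
    then have "real (h n) < real n / 2" by (simp add: divide_less_eq)
    then show ?case using elim by simp
  qed
  have LN0: "(\<lambda>n. N0 n / real n) \<longlonglongrightarrow> 1"
  proof -
    have "(\<lambda>n. 1 - real (h n) / real n) \<longlonglongrightarrow> 1" using tendsto_diff[OF tendsto_const Lh, of 1] by simp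
    moreover have "eventually (\<lambda>n. 1 - real (h n) / real n = N0 n / real n) sequentially"
      using ev_h by eventually_elim (simp add: N0_def of_nat_diff field_simps)
    ultimately show ?thesis by (rule Lim_transform_eventually)
  qed
  have N0lim: "filterlim N0 at_top sequentially"
  proof -
    have A: "filterlim (\<lambda>n. N0 n / real n * real n) at_top sequentially"
      by (rule filterlim_tendsto_pos_mult_at_top[OF LN0]) (simp_all add: filterlim_real_sequentially)
    have B: "eventually (\<lambda>n. N0 n / real n * real n = N0 n) sequentially"
      using eventually_gt_at_top[of 0] by eventually_elim simp
    show ?thesis using filterlim_cong[OF refl refl B] A by simp
  qed
  have yy: "min y1 y2 = y1 * y2" using y by (auto simp: min_def max_def)
  have LB1: "(\<lambda>n. real (b1 n) / real n) \<longlonglongrightarrow> y1" unfolding b1_def by (rule floor_ratio[OF y(1) LN0])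
  have LB2: "(\<lambda>n. real (b2 n) / real n) \<longlonglongrightarrow> y2" unfolding b2_def by (rule floor_ratio[OF y(3) LN0])
  have LBm: "(\<lambda>n. real (bm n) / real n) \<longlonglongrightarrow> y1 * y2" unfolding bm_def yy[symmetric]
    by (rule floor_ratio[OF _ LN0]) (use y in simp)
  have I1: "(\<lambda>n. 1 / real (b1 n)) \<longlonglongrightarrow> 0" unfolding b1_def by (rule inv_floor[OF y(1) N0lim])
  have I2: "(\<lambda>n. 1 / real (b2 n)) \<longlonglongrightarrow> 0" unfolding b2_def by (rule inv_floor[OF y(3) N0lim])
  have Im: "(\<lambda>n. 1 / real (bm n)) \<longlonglongrightarrow> 0" unfolding bm_def by (rule inv_floor[OF _ N0lim]) (use y in simp)
  have I0: "(\<lambda>n. 1 / N0 n) \<longlonglongrightarrow> 0"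
    by (intro tendsto_divide_0[OF tendsto_const] filterlim_at_top_imp_at_infinity N0lim)
  have N0eq: "real (n - h n) = N0 n" for n by (simp add: N0_def)
  define cnt where "cnt S w n = (if w \<in> S then (if \<not> (\<exists>u. (u, w) \<in> E) then a1 n else if \<not> (\<exists>u. (w, u) \<in> E) then a2 n else min (a1 n) (a2 n))
     else if w \<in> Nout V E S \<and> w \<in> Nin V E S then bm n
     else if w \<in> Nout V E S then b1 n
     else if w \<in> Nin V E S then b2 n
     else n - h n)" for S w n
  define den where "den S w n = (if w \<in> S then T n else real n)" for S :: "'a set" and w n
  define err where "err S n = (\<Sum>e\<in>E - (Eout E S \<union> Ein E S). 1 / real (cnt S (snd e) n))" for S n
  define LBS where "LBS S n = (\<Prod>w\<in>V. real (cnt S w n) / den S w n) * (1 - err S n)" for S n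
  have Lw: "(\<lambda>n. real (cnt S w n) / den S w n) \<longlonglongrightarrow> limv V E x1 x2 y1 y2 S w" for S w
  proof (cases "w \<in> S")
    case True
    note wS = True
    show ?thesis
    proof (cases "\<exists>u. (u, w) \<in> E")
      case False
      then have "\<And>n. real (cnt S w n) / den S w n = real (a1 n) / T n" "limv V E x1 x2 y1 y2 S w = x1"
        using wS by (simp_all add: cnt_def den_def limv_def)
      then show ?thesis using LA1 by simp
    next
      case True
      note hin = True
      show ?thesis
      proof (cases "\<exists>u. (w, u) \<in> E")
        case False
        then have "\<And>n. real (cnt S w n) / den S w n = real (a2 n) / T n" "limv V E x1 x2 y1 y2 S w = x2"
          using wS hin by (simp_all add: cnt_def den_def limv_def)
        then show ?thesis using LA2 by simp
      next
        case True
        then have "\<And>n. real (cnt S w n) / den S w n = real (min (a1 n) (a2 n)) / T n"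
            "limv V E x1 x2 y1 y2 S w = min x1 x2"
          using wS hin by (simp_all add: cnt_def den_def limv_def)
        then show ?thesis using LAm by simp
      qed
    qed
  next
    case False
    note wS = False
    have L0: "(\<lambda>n. real (n - h n) / real n) \<longlonglongrightarrow> 1" using LN0 by (simp add: N0eq)
    show ?thesis
    proof (cases "w \<in> Nout V E S")
      case True
      note o = True
      show ?thesis
      proof (cases "w \<in> Nin V E S")
        case True
        then have "\<And>n. real (cnt S w n) / den S w n = real (bm n) / real n"
            "limv V E x1 x2 y1 y2 S w = y1 * y2"
          using wS o by (simp_all add: cnt_def den_def limv_def)
        then show ?thesis using LBm by simp
      next
        case False
        then have "\<And>n. real (cnt S w n) / den S w n = real (b1 n) / real n"
            "limv V E x1 x2 y1 y2 S w = y1"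
          using wS o by (simp_all add: cnt_def den_def limv_def)
        then show ?thesis using LB1 by simp
      qed
    next
      case False
      note o = False
      show ?thesis
      proof (cases "w \<in> Nin V E S")
        case True
        then have "\<And>n. real (cnt S w n) / den S w n = real (b2 n) / real n"
            "limv V E x1 x2 y1 y2 S w = y2"
          using wS o by (simp_all add: cnt_def den_def limv_def)
        then show ?thesis using LB2 by simp
      next
        case False
        then have "\<And>n. real (cnt S w n) / den S w n = real (n - h n) / real n"
            "limv V E x1 x2 y1 y2 S w = 1"
          using wS o by (simp_all add: cnt_def den_def limv_def)
        then show ?thesis using L0 by simp
      qed
    qed
  qed
  have Le: "(\<lambda>n. 1 / real (cnt S w n)) \<longlonglongrightarrow> 0" if wS: "w \<notin> S" for S w
  proof -
    have L0: "(\<lambda>n. 1 / real (n - h n)) \<longlonglongrightarrow> 0" using I0 by (simp add: N0eq)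
    show ?thesis
    proof (cases "w \<in> Nout V E S")
      case True
      note o = True
      show ?thesis
      proof (cases "w \<in> Nin V E S")
        case True
        then have "\<And>n. cnt S w n = bm n" using wS o by (simp add: cnt_def)
        then show ?thesis using Im by simp
      next
        case False
        then have "\<And>n. cnt S w n = b1 n" using wS o by (simp add: cnt_def)
        then show ?thesis using I1 by simp
      qed
    next
      case False
      note o = False
      show ?thesis
      proof (cases "w \<in> Nin V E S")
        case True
        then have "\<And>n. cnt S w n = b2 n" using wS o by (simp add: cnt_def)
        then show ?thesis using I2 by simp
      next
        case False
        then have "\<And>n. cnt S w n = n - h n" using wS o by (simp add: cnt_def)
        then show ?thesis using L0 by simp
      qed
    qed
  qed
  have LS: "(\<lambda>n. LBS S n) \<longlonglongrightarrow> tm V E S x1 x2 y1 y2" if S: "S \<in> indep_sets V E" for S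
  proof -
    have A: "(\<lambda>n. (\<Prod>w\<in>V. real (cnt S w n) / den S w n)) \<longlonglongrightarrow> (\<Prod>w\<in>V. limv V E x1 x2 y1 y2 S w)"
      by (rule tendsto_prod) (rule Lw)
    have B: "(\<lambda>n. err S n) \<longlonglongrightarrow> (\<Sum>e\<in>E - (Eout E S \<union> Ein E S). 0)"
      unfolding err_def
    proof (rule tendsto_sum)
      fix e assume "e \<in> E - (Eout E S \<union> Ein E S)"
      then have "snd e \<notin> S" by (auto simp: Ein_def)
      then show "(\<lambda>n. 1 / real (cnt S (snd e) n)) \<longlonglongrightarrow> 0" by (rule Le)
    qed
    have "(\<lambda>n. LBS S n) \<longlonglongrightarrow> (\<Prod>w\<in>V. limv V E x1 x2 y1 y2 S w) * (1 - (\<Sum>e\<in>E - (Eout E S \<union> Ein E S). 0))"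
      unfolding LBS_def by (rule tendsto_mult[OF A tendsto_diff[OF tendsto_const B]])
    then show ?thesis using prod_limv[OF H Ene S] by simp
  qed
  define LB where "LB n = (\<Sum>S\<in>indep_sets V E. LBS S n)" for n
  have "LB \<longlonglongrightarrow> (\<Sum>S\<in>indep_sets V E. tm V E S x1 x2 y1 y2)"
    unfolding LB_def[abs_def] by (rule tendsto_sum) (rule LS)
  then have "LB \<longlonglongrightarrow> fH V E x1 x2 y1 y2" by (simp add: fH_tm)
  then have ev_LB: "eventually (\<lambda>n. LB n > 1 + \<delta>) sequentially"
    by (rule order_tendstoD) (rule fgt)
  have "(\<lambda>n. real (a1 n) / T n * (real (b1 n) / real n) + real (a2 n) / T n * (real (b2 n) / real n))
      \<longlonglongrightarrow> x1 * y1 + x2 * y2"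
    by (intro tendsto_intros LA1 LA2 LB1 LB2)
  then have ev_cost: "eventually (\<lambda>n. real (a1 n) / T n * (real (b1 n) / real n) + real (a2 n) / T n * (real (b2 n) / real n)
      < x1 * y1 + x2 * y2 + \<epsilon>) sequentially"
    by (rule order_tendstoD) (use ep in simp)
  show ?thesis
    using ev_LB ev_cost ev_h
  proof eventually_elim
    case (elim n)
    define q where "q = p n"
    have q: "0 < q" "q < 1" using pp by (simp_all add: q_def)
    define Qm where "Qm = hubQ n (a1 n) (a2 n) (b1 n) (b2 n) q"
    have QQ: "Qm \<in> Qmats n" using q by (auto simp: Qm_def hubQ_def Qmats_def)
    have N0nn: "N0 n \<ge> 0" by (simp add: N0_def)
    have fl: "nat \<lfloor>c * N0 n\<rfloor> \<le> n - h n" if "0 \<le> c" "c \<le> 1" for c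
    proof -
      have "c * N0 n \<le> N0 n" using that N0nn by (simp add: mult_left_le_one_le)
      then have "real (nat \<lfloor>c * N0 n\<rfloor>) \<le> real (n - h n)" using that N0nn
        by (simp add: N0_def) linarith
      then show ?thesis by simp
    qed
    have "b1 n \<le> n - h n" using fl[of y1] y by (simp add: b1_def)
    then have hb1: "h n + b1 n \<le> n" using elim by linarith
    have "b2 n \<le> n - h n" using fl[of y2] y by (simp add: b2_def)
    then have hb2: "h n + b2 n \<le> n" using elim by linarith
    have bm1: "bm n \<le> b1 n" unfolding bm_def b1_def
      by (intro nat_mono floor_mono mult_right_mono N0nn) simp
    have bm2: "bm n \<le> b2 n" unfolding bm_def b2_def
      by (intro nat_mono floor_mono mult_right_mono N0nn) simp
    have cardC: "card (hubC V E n (a1 n) (a2 n) (b1 n) (b2 n) (bm n) S w) = cnt S w n" for S w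
      using hb1 hb2 bm1 bm2 by (simp add: hubC_def cnt_def h_def)
    have hh: "(\<Sum>S\<in>indep_sets V E. q ^ (card E - maxdeg V E * card S) *
      ((\<Prod>w\<in>V. real (cnt S w n)) * (1 - err S n)))
     \<le> (\<Sum>\<phi>\<in>PiE V (\<lambda>_. {..<n}). \<Prod>e\<in>E. Qm (\<phi> (fst e)) (\<phi> (snd e)))"
      using hub_hom[OF H Ene q(1) less_imp_le[OF q(2)], of "a1 n" "a2 n" "b1 n" n "b2 n" "bm n"]
        hb1 hb2 bm1 bm2 by (simp add: cardC err_def Qm_def h_def)
    have tmeq: "q ^ (card E - D * card S) * ((\<Prod>w\<in>V. real (cnt S w n)) * (1 - err S n))
        = q ^ card E * real n ^ card V * LBS S n" if S: "S \<in> indep_sets V E" for S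
    proof -
      have SV: "S \<subseteq> V" using indep_sub[OF S] .
      have le: "D * card S \<le> card E"
      proof -
        have "card (Eout E S \<union> Ein E S) \<le> card E"
          by (rule card_mono[OF digraph_finE[OF H]]) (auto simp: Eout_def Ein_def)
        then show ?thesis using card_ES[OF H S] by (simp add: D_def)
      qed
      have dd: "(\<Prod>w\<in>V. den S w n) = real n ^ card V * P n ^ card S"
      proof -
        have "(\<Prod>w\<in>V. den S w n) = (\<Prod>w\<in>V. if w \<in> S then real n * P n else real n)"
          by (intro prod.cong refl) (simp add: den_def T_def)
        then show ?thesis using prod_den[OF fV SV] by simp
      qed
      define dv where "dv = real n ^ card V * P n ^ card S"
      have dpos: "dv \<noteq> 0" using elim Ppos[of n] by (simp add: dv_def)
      have "(\<Prod>w\<in>V. real (cnt S w n) / den S w n) = (\<Prod>w\<in>V. real (cnt S w n)) / (\<Prod>w\<in>V. den S w n)"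
        by (rule prod_dividef)
      then have e1: "(\<Prod>w\<in>V. real (cnt S w n) / den S w n) = (\<Prod>w\<in>V. real (cnt S w n)) / dv"
        using dd by (simp add: dv_def)
      have pc: "(\<Prod>w\<in>V. real (cnt S w n)) = real n ^ card V * P n ^ card S * (\<Prod>w\<in>V. real (cnt S w n) / den S w n)"
        unfolding e1 dv_def[symmetric] using dpos by simp
      have qq: "q ^ (card E - D * card S) * P n ^ card S = q ^ card E"
      proof -
        have "P n ^ card S = q ^ (D * card S)" by (simp add: P_def q_def power_mult)
        then show ?thesis using le by (simp add: power_add[symmetric])
      qed
      show ?thesis unfolding LBS_def pc qq[symmetric] by (simp add: mult_ac)
    qed
    have "q ^ card E * real n ^ card V * LB n
        = (\<Sum>S\<in>indep_sets V E. q ^ (card E - D * card S) * ((\<Prod>w\<in>V. real (cnt S w n)) * (1 - err S n)))"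
      unfolding LB_def sum_distrib_left using tmeq by simp
    also have "\<dots> \<le> real n ^ card V * hom_density V E n Qm"
      using hh elim by (simp add: hom_density_def D_def)
    finally have "q ^ card E * real n ^ card V * LB n \<le> real n ^ card V * hom_density V E n Qm" .
    then have "q ^ card E * LB n \<le> hom_density V E n Qm" using elim by (simp add: mult.commute mult.left_commute)
    moreover have "(1 + \<delta>) * q ^ card E \<le> q ^ card E * LB n" using elim q by (simp add: mult.commute less_imp_le)
    ultimately have hd2: "(1 + \<delta>) * q ^ card E \<le> hom_density V E n Qm" by simp
    have "Phi V E n q \<delta> \<le> Ip_mat n q Qm" by (rule Phi_le[OF q QQ hd2])
    also have "\<dots> \<le> ln (1/q) * (real (a1 n) * real (b1 n) + real (b2 n) * real (a2 n))"
      unfolding Qm_def by (rule hub_cost[OF q])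
    finally have Phi: "Phi V E n q \<delta> \<le> ln (1/q) * (real (a1 n) * real (b1 n) + real (b2 n) * real (a2 n))" .
    have lq: "ln (1/q) > 0" using q by simp
    have den: "real n ^ 2 * q ^ D * ln (1/q) > 0" using q elim lq by simp
    have "rate V E \<delta> n q = Phi V E n q \<delta> / (real n ^ 2 * q ^ D * ln (1/q))"
      by (simp add: rate_def D_def)
    also have "\<dots> \<le> ln (1/q) * (real (a1 n) * real (b1 n) + real (b2 n) * real (a2 n)) / (real n ^ 2 * q ^ D * ln (1/q))"
      by (rule divide_right_mono[OF Phi]) (use den in simp)
    also have "\<dots> = real (a1 n) / T n * (real (b1 n) / real n) + real (a2 n) / T n * (real (b2 n) / real n)"
    proof -
      have "T n = real n * q ^ D" by (simp add: T_def P_def q_def)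
      then show ?thesis using lq q elim by (simp add: field_simps power2_eq_square)
    qed
    finally show ?case using elim by (simp add: q_def)
  qed
qed

lemma part1:
  fixes p :: "nat \<Rightarrow> real"
  assumes H: "digraph V E" and Ene: "E \<noteq> {}" and dp: "\<delta> > 0"
    and pp: "\<forall>n. 0 < p n \<and> p n < 1"
    and lim: "(\<lambda>n. real n powr (- 1 / real (maxdeg V E)) / p n) \<longlonglongrightarrow> 0"
    and p0: "p \<longlonglongrightarrow> 0" and ep: "\<epsilon> > 0"
  shows "eventually (\<lambda>n. rate V E \<delta> n (p n) \<le> FH V E \<delta> + \<epsilon>) sequentially"
proof -
  have D1: "maxdeg V E \<ge> 1" by (rule maxdeg_pos[OF H Ene])
  have pp': "\<forall>n. 0 < p n" using pp by simp
  have g: "filterlim (\<lambda>n. real n powr 1 * p n ^ maxdeg V E) at_top sequentially"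
    by (rule growth[OF D1 pp']) (use lim in simp)
  then have Tlim: "filterlim (\<lambda>n. real n * p n ^ maxdeg V E) at_top sequentially" by simp
  let ?T' = "{x1 * y1 + x2 * y2 | x1 x2 y1 y2.
      x1 \<ge> 0 \<and> x2 \<ge> 0 \<and> 0 \<le> y1 \<and> y1 \<le> 1 \<and> 0 \<le> y2 \<and> y2 \<le> 1 \<and>
      max y1 y2 = 1 \<and> fH V E x1 x2 y1 y2 = 1 + \<delta>}"
  obtain a1 a2 where a: "0 \<le> a1" "0 \<le> a2" "fH V E a1 a2 1 1 = 1 + \<delta>" using FH_edge_ne[OF H Ene dp] by blast
  have "a1 * 1 + a2 * 1 \<in> ?T'" using a by (intro CollectI exI[of _ a1] exI[of _ a2] exI[of _ 1]) simp
  then have ne: "?T' \<noteq> {}" by blast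
  have "Inf ?T' < FH V E \<delta> + \<epsilon>/2" using part2[OF H Ene dp] ep unfolding FH_edge_def by simp
  then obtain c0 where "c0 \<in> ?T'" "c0 < FH V E \<delta> + \<epsilon>/2" using cInf_lessD[OF ne] by blast
  then obtain x1 x2 y1 y2 where pt: "c0 = x1 * y1 + x2 * y2" "x1 \<ge> 0" "x2 \<ge> 0" "0 \<le> y1" "y1 \<le> 1"
    "0 \<le> y2" "y2 \<le> 1" "max y1 y2 = 1" "fH V E x1 x2 y1 y2 = 1 + \<delta>" and c0: "c0 < FH V E \<delta> + \<epsilon>/2"
    by blast
  have c0nn: "c0 \<ge> 0" using pt by simp
  define l where "l = 1 + \<epsilon> / (4 * (c0 + 1))"
  have l1: "l > 1" using ep c0nn by (simp add: l_def)
  have sc: "fH V E (l*x1) (l*x2) y1 y2 - 1 \<ge> l * (fH V E x1 x2 y1 y2 - 1)"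
    by (rule fH_ge_scale[OF H Ene less_imp_le[OF l1] pt(2) pt(3) pt(4) pt(6)])
  have "l * \<delta> > 1 * \<delta>" using l1 dp by (intro mult_strict_right_mono) auto
  then have fgt: "fH V E (l*x1) (l*x2) y1 y2 > 1 + \<delta>" using sc pt(9) by simp
  have ev: "eventually (\<lambda>n. rate V E \<delta> n (p n) \<le> (l*x1) * y1 + (l*x2) * y2 + \<epsilon>/4) sequentially"
    by (rule hub_rate[OF H Ene dp pp Tlim p0 _ _ pt(4-8) fgt]) (use pt l1 ep in auto)
  have bd: "(l*x1) * y1 + (l*x2) * y2 + \<epsilon>/4 < FH V E \<delta> + \<epsilon>"
  proof -
    have "(l*x1) * y1 + (l*x2) * y2 = l * c0" using pt(1) by (simp add: algebra_simps)
    also have "\<dots> = c0 + \<epsilon> * (c0 / (4 * (c0 + 1)))" using c0nn by (simp add: l_def field_simps)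
    also have "c0 / (4 * (c0 + 1)) \<le> 1/4" using c0nn by (simp add: field_simps)
    then have "\<epsilon> * (c0 / (4 * (c0 + 1))) \<le> \<epsilon> * (1/4)" using ep by (intro mult_left_mono) auto
    then have "c0 + \<epsilon> * (c0 / (4 * (c0 + 1))) \<le> c0 + \<epsilon>/4" by simp
    finally show ?thesis using c0 by simp
  qed
  show ?thesis using ev by eventually_elim (use bd in linarith)
qed

lemma lim_weaken:
  fixes p :: "nat \<Rightarrow> real"
  assumes D1: "D \<ge> (1::nat)" and pp: "\<forall>n. 0 < p n"
    and lim: "(\<lambda>n. real n powr (- 1 / real D) / p n) \<longlonglongrightarrow> 0"
  shows "(\<lambda>n. real n powr (- 2 / real D) / p n) \<longlonglongrightarrow> 0"
proof (rule tendsto_sandwich[OF _ _ tendsto_const lim])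
  show "eventually (\<lambda>n. 0 \<le> real n powr (- 2 / real D) / p n) sequentially"
    using pp by (intro always_eventually allI) (simp add: less_imp_le)
  show "eventually (\<lambda>n. real n powr (- 2 / real D) / p n \<le> real n powr (- 1 / real D) / p n) sequentially"
    using eventually_ge_at_top[of 1]
  proof eventually_elim
    case (elim n)
    have "real n powr (- 2 / real D) \<le> real n powr (- 1 / real D)"
      by (rule powr_mono) (use elim D1 in \<open>auto simp: divide_le_cancel\<close>)
    then show ?case using pp by (simp add: divide_right_mono less_imp_le)
  qed
qed

theorem theorem1p4:
  fixes V :: "'v set" and E :: "('v \<times> 'v) set" and \<delta> :: real
  assumes H: "digraph V E"
    and nonempty_edges: "E \<noteq> {}"
    and delta_pos: "\<delta> > 0"
  shows
    "(\<forall>p :: nat \<Rightarrow> real.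
        (\<forall>n. 0 < p n \<and> p n < 1) \<and>
        ((\<lambda>n. real n powr (- 1 / real (maxdeg V E)) / p n) \<longlonglongrightarrow> 0) \<and>
        (p \<longlonglongrightarrow> 0)
      \<longrightarrow> (\<forall>\<epsilon>>0. eventually (\<lambda>n. rate V E \<delta> n (p n) \<le> FH V E \<delta> + \<epsilon>) sequentially))
   \<and> FH_edge V E \<delta> = FH V E \<delta>
   \<and> (connected_digraph V E \<and> regular V E (maxdeg V E) \<longrightarrow>
       (\<forall>p :: nat \<Rightarrow> real.
        (\<forall>n. 0 < p n \<and> p n < 1) \<and>
        ((\<lambda>n. real n powr (- 2 / real (maxdeg V E)) / p n) \<longlonglongrightarrow> 0) \<and>
        (p \<longlonglongrightarrow> 0)
      \<longrightarrow> (\<forall>\<epsilon>>0. eventually (\<lambda>n. rate V E \<delta> n (p n) \<le> \<delta> powr (2 / real (card V)) + \<epsilon>)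
              sequentially)))
   \<and> (connected_digraph V E \<and> regular V E (maxdeg V E) \<longrightarrow>
       (\<forall>p :: nat \<Rightarrow> real.
        (\<forall>n. 0 < p n \<and> p n < 1) \<and>
        ((\<lambda>n. real n powr (- 1 / real (maxdeg V E)) / p n) \<longlonglongrightarrow> 0) \<and>
        (p \<longlonglongrightarrow> 0)
      \<longrightarrow> (\<forall>\<epsilon>>0. eventually (\<lambda>n. rate V E \<delta> n (p n)
              \<le> min (FH V E \<delta>) (\<delta> powr (2 / real (card V))) + \<epsilon>) sequentially)))"
proof (intro conjI impI allI)
  fix p :: "nat \<Rightarrow> real" and \<epsilon> :: real
  assume h: "(\<forall>n. 0 < p n \<and> p n < 1) \<and> ((\<lambda>n. real n powr (- 1 / real (maxdeg V E)) / p n) \<longlonglongrightarrow> 0) \<and> (p \<longlonglongrightarrow> 0)"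
  show "0 < \<epsilon> \<Longrightarrow> eventually (\<lambda>n. rate V E \<delta> n (p n) \<le> FH V E \<delta> + \<epsilon>) sequentially"
    using part1[OF H nonempty_edges delta_pos] h by blast
next
  show "FH_edge V E \<delta> = FH V E \<delta>" by (rule part2[OF H nonempty_edges delta_pos])
next
  fix p :: "nat \<Rightarrow> real" and \<epsilon> :: real
  assume c: "connected_digraph V E \<and> regular V E (maxdeg V E)"
  assume h: "(\<forall>n. 0 < p n \<and> p n < 1) \<and> ((\<lambda>n. real n powr (- 2 / real (maxdeg V E)) / p n) \<longlonglongrightarrow> 0) \<and> (p \<longlonglongrightarrow> 0)"
  show "0 < \<epsilon> \<Longrightarrow> eventually (\<lambda>n. rate V E \<delta> n (p n) \<le> \<delta> powr (2 / real (card V)) + \<epsilon>) sequentially"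
    using part3[OF H nonempty_edges delta_pos] c h by blast
next
  fix p :: "nat \<Rightarrow> real" and \<epsilon> :: real
  assume c: "connected_digraph V E \<and> regular V E (maxdeg V E)"
  assume h: "(\<forall>n. 0 < p n \<and> p n < 1) \<and> ((\<lambda>n. real n powr (- 1 / real (maxdeg V E)) / p n) \<longlonglongrightarrow> 0) \<and> (p \<longlonglongrightarrow> 0)"
  assume ep: "0 < \<epsilon>"
  have pp: "\<forall>n. 0 < p n" using h by simp
  have l2: "(\<lambda>n. real n powr (- 2 / real (maxdeg V E)) / p n) \<longlonglongrightarrow> 0"
    by (rule lim_weaken[OF maxdeg_pos[OF H nonempty_edges] pp]) (use h in simp)
  have e1: "eventually (\<lambda>n. rate V E \<delta> n (p n) \<le> FH V E \<delta> + \<epsilon>) sequentially"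
    using part1[OF H nonempty_edges delta_pos _ _ _ ep] h by blast
  have e2: "eventually (\<lambda>n. rate V E \<delta> n (p n) \<le> \<delta> powr (2 / real (card V)) + \<epsilon>) sequentially"
    using part3[OF H nonempty_edges delta_pos _ _ l2 _ ep] c h by blast
  show "eventually (\<lambda>n. rate V E \<delta> n (p n) \<le> min (FH V E \<delta>) (\<delta> powr (2 / real (card V))) + \<epsilon>) sequentially"
    using e1 e2 by eventually_elim (simp add: min_def)
qed

end
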